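(* Consider the single-block on-chain auction game described in the context with $n\ge 2$ (so $N=\{0,1,\dots,n\}$) and reserve price $r=0$, where bidder 0's value is $\mathrm{Uniform}[0,1]$ and bidders $1$ through $n$ have values i.i.d. with density $f$ and CDF $F$ on $[0,1]$ satisfying $\int_0^v F^{n-1}(\theta)\,d\theta\le \frac{v}{n}$ for all $v\in[0,1]$. Let $\underline{v}$ solve $$\int_0^1 F^{n-1}(\theta)\,d\theta-\int_{\underline{v}}^1 F^n(\theta)\,d\theta=\frac{n+1}{n-1}\int_0^{\underline{v}}F^{n-1}(\theta)\,d\theta.$$ Then the following strategy profile constitutes an equilibrium: (i) Bidders $1$ through $n$ bid truthfully and tip $t(v)=0$ if $v<\underline{v}$ and $t(v)=\frac12\int_{\underline{v}}^v F^{n-1}(\theta)\,d\theta$ otherwise, where $v$ is the bidder's value. (ii) Bidder 0, as a function of the observed tips $t_1,\dots,t_n$ and his value $v_0$, bribes (i.e. pays $\sum_i t_i$ to the proposer in exchange for excluding bidder $1$ through $n$'s bids) if $\sum_{i=1}^n t_i\le v_0$ and does not bribe if $\sum_{i=1}^n t_i>v_0$; moreover bidder 0 submits a truthful nonzero bid if and only if he bribes. (iii) The proposer accepts bidder 0's bribe whenever it is offered and excludes the other bids; otherwise the proposer includes all bids.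
   Context: Single-block on-chain auction game. A seller has one indivisible good; there are $n+1$ buyers $N=\{0,1,\dots,n\}$ with quasilinear utilities and independent private values ($v_0\sim F_0$, $v_1,\dots,v_n$ i.i.d. $\sim F$, supports $[0,1]$), common knowledge. The seller runs a sealed-bid second-price auction with reserve $r$ in a single block built by a single profit-maximizing proposer. Timing: buyers learn values; buyers $1,\dots,n$ simultaneously submit a private bid $b_i$ and a public tip $t_i\ge0$; buyer 0 observes the tips and $v_0$, may make the proposer a take-it-or-leave-it offer of a subset $S\subseteq\{1,\dots,n\}$ and a payment $p$ to exclude the bids in $S$, and submits his own bid $b_0$; the proposer accepts iff $p\ge\sum_{i\in S}t_i$ (then includes exactly the bids of $N\setminus S$ and receives $p$), otherwise includes all bids; the second-price auction is computed on included bids (highest included bid wins if at least $r$, paying the maximum of $r$ and the other included bids). A bidder pays his tip iff his bid is included. Solution concept: perfect Bayesian equilibrium restricted to profiles in which (a) bidders $1,\dots,n$ bid truthfully and use a common tipping function of their value, and (b) bidder 0 bids his value if, given the tips, he assigns positive probability to winning, and otherwise bids $0$ or does not bid; these are called equilibria. *)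

theory Defs
  imports "HOL-Probability.Probability"
begin

text \<open>Buyers are indexed by naturals:
  buyer 0 is the special buyer, buyers 1..n are the others; the buyer set is {0..n}.
  A value vector / tip vector / bid vector is a function nat to real (only the
  coordinates 1..n are meaningful).\<close>

type_synonym vec = "nat \<Rightarrow> real"

text \<open>An action of buyer 0: an optional take-it-or-leave-it offer (S, p) to the proposer
  (exclude the bids in S in exchange for payment p) and an optional own bid
  (None = buyer 0 does not bid).\<close>
type_synonym action0 = "(nat set \<times> real) option \<times> real option"

definition valid_action0 :: "nat \<Rightarrow> action0 \<Rightarrow> bool" where
  "valid_action0 n a = (case fst a of None \<Rightarrow> True
      | Some (S, p) \<Rightarrow> S \<subseteq> {1..n} \<and> 0 \<le> p)"

definition proposer_accepts :: "vec \<Rightarrow> nat set \<Rightarrow> real \<Rightarrow> bool" where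
  "proposer_accepts \<tau> S p \<longleftrightarrow> (\<Sum>i\<in>S. \<tau> i) \<le> p"

definition excluded :: "vec \<Rightarrow> (nat set \<times> real) option \<Rightarrow> nat set" where
  "excluded \<tau> off = (case off of None \<Rightarrow> {}
      | Some (S, p) \<Rightarrow> if proposer_accepts \<tau> S p then S else {})"

definition bribe_paid :: "vec \<Rightarrow> (nat set \<times> real) option \<Rightarrow> real" where
  "bribe_paid \<tau> off = (case off of None \<Rightarrow> 0
      | Some (S, p) \<Rightarrow> if proposer_accepts \<tau> S p then p else 0)"

text \<open>Bids included in the block (None = no included bid).  bd gives the bids of buyers
  1..n, b0 the (optional) bid of buyer 0.\<close>
definition included_bids :: "nat \<Rightarrow> vec \<Rightarrow> (nat set \<times> real) option \<Rightarrow> vec \<Rightarrow> real option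
    \<Rightarrow> nat \<Rightarrow> real option" where
  "included_bids n \<tau> off bd b0 i =
     (if i \<in> excluded \<tau> off then None
      else if i = 0 then b0 else if i \<in> {1..n} then Some (bd i) else None)"

definition spa_winners :: "nat set \<Rightarrow> real \<Rightarrow> (nat \<Rightarrow> real option) \<Rightarrow> nat set" where
  "spa_winners N r B = {i \<in> N. \<exists>b. B i = Some b \<and> r \<le> b \<and>
                         (\<forall>j\<in>N. \<forall>c. B j = Some c \<longrightarrow> c \<le> b)}"

definition spa_price :: "nat set \<Rightarrow> real \<Rightarrow> (nat \<Rightarrow> real option) \<Rightarrow> nat \<Rightarrow> real" where
  "spa_price N r B i = Max (insert r {c. \<exists>j\<in>N - {i}. B j = Some c})"

definition spa_win_share :: "nat set \<Rightarrow> real \<Rightarrow> (nat \<Rightarrow> real option) \<Rightarrow> nat \<Rightarrow> real" where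
  "spa_win_share N r B i = (if i \<in> spa_winners N r B then 1 / real (card (spa_winners N r B)) else 0)"

definition spa_util :: "nat set \<Rightarrow> real \<Rightarrow> (nat \<Rightarrow> real option) \<Rightarrow> nat \<Rightarrow> real \<Rightarrow> real" where
  "spa_util N r B i v = spa_win_share N r B i * (v - spa_price N r B i)"

definition util_i :: "nat \<Rightarrow> real \<Rightarrow> nat \<Rightarrow> vec \<Rightarrow> vec \<Rightarrow> vec \<Rightarrow> action0 \<Rightarrow> real" where
  "util_i n r i vs bd \<tau> a =
     (let B = included_bids n \<tau> (fst a) bd (snd a)
      in spa_util {0..n} r B i (vs i) - (if B i = None then 0 else \<tau> i))"

definition util_0 :: "nat \<Rightarrow> real \<Rightarrow> real \<Rightarrow> vec \<Rightarrow> vec \<Rightarrow> action0 \<Rightarrow> real" where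
  "util_0 n r v0 bd \<tau> a =
     spa_util {0..n} r (included_bids n \<tau> (fst a) bd (snd a)) 0 v0 - bribe_paid \<tau> (fst a)"

definition tipvec :: "nat \<Rightarrow> (real \<Rightarrow> real) \<Rightarrow> vec \<Rightarrow> vec" where
  "tipvec n t vs = restrict (\<lambda>j. t (vs j)) {1..n}"

abbreviation vals_meas :: "nat \<Rightarrow> real measure \<Rightarrow> vec measure" where
  "vals_meas n PF \<equiv> PiM {1..n} (\<lambda>_. PF)"

abbreviation tips_space :: "nat \<Rightarrow> vec measure" where
  "tips_space n \<equiv> PiM {1..n} (\<lambda>_. (borel :: real measure))"

abbreviation unif01 :: "real measure" where
  "unif01 \<equiv> uniform_measure lborel {0..1}"

definition EU_i :: "nat \<Rightarrow> real \<Rightarrow> real measure \<Rightarrow> (real \<Rightarrow> real) \<Rightarrow> (vec \<Rightarrow> real \<Rightarrow> action0)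
    \<Rightarrow> nat \<Rightarrow> real \<Rightarrow> real \<Rightarrow> real \<Rightarrow> real" where
  "EU_i n r PF t \<sigma>0 i v b s =
     integral\<^sup>L (unif01 \<Otimes>\<^sub>M PiM ({1..n} - {i}) (\<lambda>_. PF))
       (\<lambda>(v0, w). let vs = w(i := v); \<tau> = (tipvec n t vs)(i := s)
                  in util_i n r i vs (vs(i := b)) \<tau> (\<sigma>0 \<tau> v0))"

text \<open>Expected utility of buyer 0 (value v0, observed tips \<tau>, action a) under belief m
  about the values of buyers 1..n, who bid truthfully.\<close>
definition EU_0 :: "nat \<Rightarrow> real \<Rightarrow> vec measure \<Rightarrow> vec \<Rightarrow> real \<Rightarrow> action0 \<Rightarrow> real" where
  "EU_0 n r m \<tau> v0 a = integral\<^sup>L m (\<lambda>vs. util_0 n r v0 vs \<tau> a)"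

text \<open>Probability buyer 0 assigns (under belief m) to winning when bidding his value v0
  (with offer off): his bid is at least r and strictly above every other included bid
  (ties are a null event on path and are not counted as wins here).\<close>
definition win_prob_0 :: "nat \<Rightarrow> real \<Rightarrow> vec measure \<Rightarrow> vec \<Rightarrow> real \<Rightarrow> (nat set \<times> real) option \<Rightarrow> real" where
  "win_prob_0 n r m \<tau> v0 off =
     measure m {vs \<in> space m. r \<le> v0 \<and>
        (\<forall>j\<in>{1..n}. \<forall>c. included_bids n \<tau> off vs (Some v0) j = Some c \<longrightarrow> c < v0)}"

text \<open>Belief system of buyer 0: for every tip vector a probability measure on value vectors
  of buyers 1..n (supported on [0,1]^n), measurable in the tips, and consistent with Bayes'
  rule: it is a regular conditional distribution of the values given the tips.\<close>
definition consistent_beliefs :: "nat \<Rightarrow> real measure \<Rightarrow> (real \<Rightarrow> real) \<Rightarrow> (vec \<Rightarrow> vec measure) \<Rightarrow> bool" where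
  "consistent_beliefs n PF t \<mu> \<longleftrightarrow>
     \<mu> \<in> tips_space n \<rightarrow>\<^sub>M prob_algebra (vals_meas n PF) \<and>
     (\<forall>\<tau>. AE vs in \<mu> \<tau>. \<forall>j\<in>{1..n}. vs j \<in> {0..1}) \<and>
     (\<forall>A\<in>sets (tips_space n). \<forall>B\<in>sets (vals_meas n PF).
        emeasure (vals_meas n PF) ({vs \<in> space (vals_meas n PF). tipvec n t vs \<in> A} \<inter> B) =
        (\<integral>\<^sup>+ vs. indicator A (tipvec n t vs) * emeasure (\<mu> (tipvec n t vs)) B \<partial>vals_meas n PF))"

definition equilibrium :: "nat \<Rightarrow> real \<Rightarrow> real measure \<Rightarrow> (real \<Rightarrow> real) \<Rightarrow> (vec \<Rightarrow> real \<Rightarrow> action0) \<Rightarrow> bool" where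
  "equilibrium n r PF t \<sigma>0 \<longleftrightarrow>
     (\<forall>v\<in>{0..1}. 0 \<le> t v) \<and>
     (\<exists>\<mu>. consistent_beliefs n PF t \<mu> \<and>
       (\<forall>\<tau>\<in>space (tips_space n). (\<forall>j\<in>{1..n}. 0 \<le> \<tau> j) \<longrightarrow> (\<forall>v0\<in>{0..1}.
          valid_action0 n (\<sigma>0 \<tau> v0) \<and>
          (\<forall>a. valid_action0 n a \<longrightarrow> EU_0 n r (\<mu> \<tau>) \<tau> v0 a \<le> EU_0 n r (\<mu> \<tau>) \<tau> v0 (\<sigma>0 \<tau> v0)) \<and>
          (if win_prob_0 n r (\<mu> \<tau>) \<tau> v0 (fst (\<sigma>0 \<tau> v0)) > 0 then snd (\<sigma>0 \<tau> v0) = Some v0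
           else snd (\<sigma>0 \<tau> v0) \<in> {None, Some 0}))) \<and>
       (\<forall>i\<in>{1..n}. \<forall>v\<in>{0..1}. \<forall>b s. 0 \<le> s \<longrightarrow>
          EU_i n r PF t \<sigma>0 i v b s \<le> EU_i n r PF t \<sigma>0 i v v (t v)))"

definition bribe_strategy :: "nat \<Rightarrow> (vec \<Rightarrow> real \<Rightarrow> bool) \<Rightarrow> vec \<Rightarrow> real \<Rightarrow> action0" where
  "bribe_strategy n nb \<tau> v0 =
     (if (\<Sum>j\<in>{1..n}. \<tau> j) \<le> v0 then (Some ({1..n}, \<Sum>j\<in>{1..n}. \<tau> j), Some v0)
      else (None, if nb \<tau> v0 then Some 0 else None))"

end

theory Submission
  imports Defs
begin


locale setting = real_distribution PF for PF :: "real measure" +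
  fixes n :: nat and F :: "real \<Rightarrow> real" and vl :: real
  assumes n2: "2 \<le> n"
    and atomless: "\<And>x. measure PF {x} = 0"
    and neg0: "measure PF {..<0} = 0"
    and big0: "measure PF {1<..} = 0"
    and F_eq: "\<And>x. F x = measure PF {..x}"
    and Fpos: "\<And>x. 0 < x \<Longrightarrow> x \<le> 1 \<Longrightarrow> 0 < F x"
    and cond: "\<forall>v\<in>{0..1}. integral {0..v} (\<lambda>\<theta>. F \<theta> ^ (n - 1)) \<le> v / real n"
    and vl_range: "vl \<in> {0..1}"
    and vl_eq: "integral {0..1} (\<lambda>\<theta>. F \<theta> ^ (n - 1)) - integral {vl..1} (\<lambda>\<theta>. F \<theta> ^ n)
          = (real n + 1) / (real n - 1) * integral {0..vl} (\<lambda>\<theta>. F \<theta> ^ (n - 1))"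
begin

definition g :: "real \<Rightarrow> real" where "g \<theta> = F \<theta> ^ (n - 1)"
definition t :: "real \<Rightarrow> real" where
  "t v = (if v < vl then 0 else 1 / 2 * integral {vl..v} g)"

lemma F_cdf: "F = cdf PF" by (auto simp: F_eq cdf_def)

lemma F_mono: "x \<le> y \<Longrightarrow> F x \<le> F y"
  unfolding F_cdf by (rule cdf_nondecreasing)

lemma F_nonneg: "0 \<le> F x" unfolding F_cdf by (rule cdf_nonneg)
lemma F_le1: "F x \<le> 1" unfolding F_cdf by (rule cdf_bounded_prob)

lemma F_cont: "isCont F x"
  unfolding F_cdf isCont_cdf using atomless by simp

lemma F_neg: assumes "x < 0" shows "F x = 0"
proof -
  have "F x \<le> measure PF {..<0}" unfolding F_eq
    using assms by (intro finite_measure_mono) auto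
  then show ?thesis using neg0 F_nonneg[of x] by simp
qed

lemma F_ge1: assumes "1 \<le> x" shows "F x = 1"
proof -
  have "measure PF {..x} = 1 - measure PF (UNIV - {..x})"
    using prob_compl[of "{..x}"] by simp
  moreover have "measure PF (UNIV - {..x}) \<le> measure PF {1<..}"
    using assms by (intro finite_measure_mono) auto
  ultimately show ?thesis using big0 F_le1[of x] unfolding F_eq
    by (smt (verit) measure_nonneg)
qed

lemma F_cont_on: "continuous_on A F"
  using F_cont continuous_at_imp_continuous_on by blast

lemma g_cont_on: "continuous_on A g"
  unfolding g_def by (intro continuous_intros F_cont_on)

lemma g_int: "g integrable_on {a..b}"
  by (intro integrable_continuous_interval g_cont_on)

lemma g_nonneg: "0 \<le> g x" unfolding g_def by (simp add: F_nonneg)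
lemma g_le1: "g x \<le> 1" unfolding g_def by (simp add: F_nonneg F_le1 power_le_one)
lemma g_mono: "x \<le> y \<Longrightarrow> g x \<le> g y" unfolding g_def
  by (simp add: F_mono F_nonneg power_mono)
lemma g_pos: "0 < x \<Longrightarrow> x \<le> 1 \<Longrightarrow> 0 < g x" unfolding g_def
  by (simp add: Fpos)
lemma g_pos': "0 < x \<Longrightarrow> 0 < g x"
proof -
  assume "0 < x"
  then have "0 < g (min x 1)" by (intro g_pos) auto
  also have "\<dots> \<le> g x" by (intro g_mono) auto
  finally show ?thesis .
qed

lemma cond': "v \<in> {0..1} \<Longrightarrow> integral {0..v} g \<le> v / real n"
  using cond unfolding g_def by auto

lemma int_nonneg: "0 \<le> integral {a..b} g"
  by (intro integral_nonneg g_int g_nonneg)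

lemma int_combine: "a \<le> b \<Longrightarrow> b \<le> c \<Longrightarrow> integral {a..b} g + integral {b..c} g = integral {a..c} g"
  using Henstock_Kurzweil_Integration.integral_combine[OF _ _ g_int] by blast

lemma int_pos: assumes "0 \<le> a" "a < b" shows "0 < integral {a..b} g"
proof -
  define m where "m = (a + b) / 2"
  have "0 < (b - m) * g m" using assms by (intro mult_pos_pos g_pos') (auto simp: m_def)
  also have "(b - m) * g m = integral {m..b} (\<lambda>_. g m)" using assms by (simp add: m_def)
  also have "\<dots> \<le> integral {m..b} g"
    by (intro integral_le g_int g_mono) auto
  also have "\<dots> \<le> integral {a..m} g + integral {m..b} g" using int_nonneg by simp
  also have "\<dots> = integral {a..b} g" using assms by (intro int_combine) (auto simp: m_def)
  finally show ?thesis .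
qed

lemma F0: "F 0 = 0"
proof -
  have "measure PF {..0} = measure PF ({..<0} \<union> {0})" by (metis ivl_disj_un_singleton(2))
  also have "\<dots> \<le> measure PF {..<0} + measure PF {0}" by (rule measure_subadditive) auto
  finally show ?thesis using neg0 atomless[of 0] F_nonneg[of 0] unfolding F_eq by simp
qed

lemma vl_pos: "0 < vl"
proof (rule ccontr)
  assume "\<not> 0 < vl"
  then have v0: "vl = 0" using vl_range by auto
  obtain x where x: "0 \<le> x" "x \<le> 1" "F x = 1/2"
    using IVT'[of F 0 "1/2" 1] F0 F_ge1[of 1] F_cont_on by auto
  have c1: "continuous_on {0..1} (\<lambda>\<theta>. F \<theta> ^ (n - 1) - F \<theta> ^ n)"
    by (intro continuous_intros F_cont_on)
  have i1: "(\<lambda>\<theta>. F \<theta> ^ n) integrable_on {0..1}"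
    by (intro integrable_continuous_interval continuous_intros F_cont_on)
  have "integral {0..1} (\<lambda>\<theta>. F \<theta> ^ (n - 1) - F \<theta> ^ n) = 0"
  proof -
    have gi: "(\<lambda>\<theta>. F \<theta> ^ (n - 1)) integrable_on {0..1}" using g_int unfolding g_def .
    show ?thesis using vl_eq v0 integral_diff[OF gi i1] by simp
  qed
  moreover have "\<forall>y\<in>{0..1}. 0 \<le> F y ^ (n - 1) - F y ^ n"
  proof
    fix y
    have "F y ^ n = F y ^ (n - 1) * F y" using n2 by (metis Suc_diff_1 less_le_trans pos2 power_Suc2)
    also have "\<dots> \<le> F y ^ (n - 1)" using F_le1[of y] F_nonneg[of y]
      by (simp add: mult_left_le)
    finally show "0 \<le> F y ^ (n - 1) - F y ^ n" by simp
  qed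
  ultimately have "\<forall>y\<in>{0..1}. F y ^ (n - 1) - F y ^ n = 0"
    using integral_eq_0_iff[OF c1] by simp
  then have "F x ^ (n - 1) - F x ^ n = 0" using x by auto
  moreover have "F x ^ n = F x ^ (n - 1) * F x" using n2 by (metis Suc_diff_1 less_le_trans pos2 power_Suc2)
  ultimately show False using x by simp
qed

lemma vl_lt1: "vl < 1"
proof (rule ccontr)
  assume "\<not> vl < 1"
  then have v1: "vl = 1" using vl_range by auto
  have "integral {0..1} g = (real n + 1) / (real n - 1) * integral {0..1} g"
    using vl_eq v1 unfolding g_def by simp
  moreover have "0 < integral {0..1} g" by (rule int_pos) auto
  moreover have "(real n + 1) / (real n - 1) > 1" using n2 by (simp add: field_simps)
  ultimately show False
    by (metis less_irrefl mult_strict_right_mono mult_1)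
qed

lemma t_nonneg: "0 \<le> t v" unfolding t_def using int_nonneg by simp

lemma t_zero: "v \<le> vl \<Longrightarrow> t v = 0" unfolding t_def by auto

lemma t_pos: "vl < v \<Longrightarrow> 0 < t v" unfolding t_def using int_pos[of vl v] vl_pos by auto

lemma t_diff: assumes "vl \<le> x" "x \<le> y" shows "t y - t x = 1/2 * integral {x..y} g"
proof -
  have "integral {vl..x} g + integral {x..y} g = integral {vl..y} g" using assms by (intro int_combine)
  then show ?thesis using assms unfolding t_def by auto
qed

lemma t_strict: assumes "vl \<le> x" "x < y" shows "t x < t y"
  using t_diff[of x y] int_pos[of x y] assms vl_pos by auto

lemma t_mono: assumes "x \<le> y" shows "t x \<le> t y"
proof (cases "vl \<le> x")
  case True then show ?thesis using t_strict[of x y] assms by (cases "x = y") auto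
next
  case False then show ?thesis using t_zero[of x] t_nonneg[of y] by auto
qed

lemma t_le_half: assumes "0 \<le> v" shows "t v \<le> 1/2 * integral {0..v} g"
proof (cases "v < vl")
  case True then show ?thesis using int_nonneg unfolding t_def by auto
next
  case False
  then have "integral {0..vl} g + integral {vl..v} g = integral {0..v} g"
    using vl_pos by (intro int_combine) auto
  then show ?thesis using False int_nonneg[of 0 vl] unfolding t_def by auto
qed

lemma t_le: assumes "0 \<le> v" "v \<le> 1" shows "t v \<le> v / (2 * real n)"
  using t_le_half[of v] cond'[of v] assms by auto

lemma t_meas[measurable]: "t \<in> borel_measurable borel"
  by (rule borel_measurable_mono) (auto simp: mono_def t_mono)

lemma t_cont: "continuous_on {vl..1} t"
proof -
  have "continuous_on {vl..1} (\<lambda>v. 1/2 * integral {vl..v} g)"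
    by (intro continuous_intros indefinite_integral_continuous_1 g_int)
  then show ?thesis by (rule continuous_on_eq) (auto simp: t_def)
qed

definition r :: "real \<Rightarrow> real" where
  "r x = (if x \<le> 0 then vl else if t 1 \<le> x then 1 else (THE v. v \<in> {vl..1} \<and> t v = x))"

lemma t_inj: "vl \<le> x \<Longrightarrow> vl \<le> y \<Longrightarrow> t x = t y \<Longrightarrow> x = y"
  using t_strict by (metis linorder_neq_iff)

lemma r_mid: assumes "0 < x" "x < t 1" shows "r x \<in> {vl..1} \<and> t (r x) = x"
proof -
  have t0: "t vl = 0" by (simp add: t_zero)
  obtain v where v: "vl \<le> v" "v \<le> 1" "t v = x"
    using IVT'[of t vl x 1] t0 assms t_cont vl_lt1 by auto
  have "(THE v. v \<in> {vl..1} \<and> t v = x) = v"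
    using v by (intro the_equality) (auto intro: t_inj)
  then show ?thesis using assms v unfolding r_def by auto
qed

lemma r_range: "r x \<in> {vl..1}"
  using r_mid[of x] vl_lt1 unfolding r_def by auto

lemma r_t: assumes "vl < v" "v \<le> 1" shows "r (t v) = v"
proof (cases "v = 1")
  case True then show ?thesis using t_pos[of 1] vl_lt1 unfolding r_def by auto
next
  case False
  then have "t v < t 1" using assms by (intro t_strict) auto
  moreover have "0 < t v" using assms t_pos by auto
  ultimately have "r (t v) \<in> {vl..1} \<and> t (r (t v)) = t v" by (intro r_mid)
  then show ?thesis using t_inj[of "r (t v)" v] assms by auto
qed

lemma r_mono: assumes "x \<le> y" shows "r x \<le> r y"
proof -
  consider "x \<le> 0" | "t 1 \<le> y" | "0 < x" "y < t 1" using assms by fastforce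
  then show ?thesis
  proof cases
    case 1 then show ?thesis using r_range[of y] unfolding r_def by auto
  next
    case 2 then show ?thesis using r_range[of x] t_pos[of 1] vl_lt1 unfolding r_def[of y] by auto
  next
    case 3
    then have a: "r x \<in> {vl..1} \<and> t (r x) = x" and b: "r y \<in> {vl..1} \<and> t (r y) = y"
      using assms r_mid[of x] r_mid[of y] by auto
    show ?thesis
    proof (rule ccontr)
      assume "\<not> r x \<le> r y"
      then have "t (r y) < t (r x)" using b by (intro t_strict) auto
      then show False using a b assms by auto
    qed
  qed
qed

lemma r_meas[measurable]: "r \<in> borel_measurable borel"
  by (rule borel_measurable_mono) (auto simp: mono_def r_mono)

lemma r_prop: assumes "0 < x" shows "r x = 1 \<or> 2 * real n * x \<le> r x"
proof (cases "t 1 \<le> x")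
  case True then show ?thesis using assms unfolding r_def by auto
next
  case False
  then have a: "r x \<in> {vl..1} \<and> t (r x) = x" using assms by (intro r_mid) auto
  then have "x \<le> r x / (2 * real n)" using t_le[of "r x"] vl_pos by auto
  then show ?thesis using n2 by (auto simp: field_simps)
qed

end


context setting begin

abbreviation W :: "nat set \<Rightarrow> (nat \<Rightarrow> real) measure" where
  "W K \<equiv> PiM K (\<lambda>_. PF)"

definition MM :: "nat set \<Rightarrow> (nat \<Rightarrow> real) \<Rightarrow> real" where
  "MM K w = max 0 (Max ((\<lambda>j. w j) ` K))"

lemma prodK: "product_prob_space (\<lambda>_. PF)"
  by unfold_locales

lemma probW: "prob_space (W K)"
  by (intro prob_space_PiM prob_space_axioms)

lemma MM_meas[measurable]: "finite K \<Longrightarrow> MM K \<in> borel_measurable (W K)"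
  unfolding MM_def by measurable

lemma g_meas[measurable]: "g \<in> borel_measurable borel"
  by (intro borel_measurable_continuous_onI g_cont_on)

lemma F_meas[measurable]: "F \<in> borel_measurable borel"
  by (intro borel_measurable_continuous_onI F_cont_on)

lemma MM_le_iff: assumes "finite K" "K \<noteq> {}"
  shows "MM K w \<le> \<theta> \<longleftrightarrow> 0 \<le> \<theta> \<and> (\<forall>j\<in>K. w j \<le> \<theta>)"
  using assms unfolding MM_def by auto

lemma EG_nn:
  assumes K: "finite K" "K \<noteq> {}" and v: "0 \<le> v"
  shows "(\<integral>\<^sup>+ w. ennreal (max 0 (v - MM K w)) \<partial>W K) = ennreal (integral {0..v} (\<lambda>\<theta>. F \<theta> ^ card K))"
proof -
  interpret P: product_prob_space "\<lambda>_. PF" K using prodK by simp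
  interpret PS: pair_sigma_finite "W K" lborel
    by (intro pair_sigma_finite.intro P.sigma_finite_measure_axioms lborel.sigma_finite_measure_axioms)
  have pt: "ennreal (max 0 (v - MM K w)) =
      (\<integral>\<^sup>+ \<theta>. indicator {0..v} \<theta> * indicator {\<theta>. \<forall>j\<in>K. w j \<le> \<theta>} \<theta> \<partial>lborel)" for w
  proof -
    have "{0..v} \<inter> {\<theta>. \<forall>j\<in>K. w j \<le> \<theta>} = {MM K w..v}"
      using MM_le_iff[OF K, of w] by auto
    then have "(\<integral>\<^sup>+ \<theta>. indicator {0..v} \<theta> * indicator {\<theta>. \<forall>j\<in>K. w j \<le> \<theta>} \<theta> \<partial>lborel)
        = emeasure lborel {MM K w..v}"
      by (subst nn_integral_indicator[symmetric]) (auto simp: indicator_inter_arith[symmetric])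
    also have "\<dots> = ennreal (max 0 (v - MM K w))"
      by (cases "MM K w \<le> v") auto
    finally show ?thesis by simp
  qed
  have "(\<integral>\<^sup>+ w. ennreal (max 0 (v - MM K w)) \<partial>W K) =
      (\<integral>\<^sup>+ w. \<integral>\<^sup>+ \<theta>. indicator {0..v} \<theta> * indicator {\<theta>. \<forall>j\<in>K. w j \<le> \<theta>} \<theta> \<partial>lborel \<partial>W K)"
    by (simp only: pt)
  also have "\<dots> = (\<integral>\<^sup>+ \<theta>. \<integral>\<^sup>+ w. indicator {0..v} \<theta> * indicator {\<theta>. \<forall>j\<in>K. w j \<le> \<theta>} \<theta> \<partial>W K \<partial>lborel)"
    by (rule PS.Fubini'[symmetric]) (use K in measurable)
  also have "\<dots> = (\<integral>\<^sup>+ \<theta>. indicator {0..v} \<theta> * ennreal (F \<theta> ^ card K) \<partial>lborel)"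
  proof (intro nn_integral_cong)
    fix \<theta> :: real
    have "(\<integral>\<^sup>+ w. indicator {0..v} \<theta> * indicator {\<theta>. \<forall>j\<in>K. w j \<le> \<theta>} \<theta> \<partial>W K)
        = (\<integral>\<^sup>+ w. indicator {0..v} \<theta> * indicator {w \<in> space (W K). \<forall>j\<in>K. w j \<in> {..\<theta>}} w \<partial>W K)"
      by (intro nn_integral_cong) (auto simp: indicator_def)
    also have "\<dots> = indicator {0..v} \<theta> * emeasure (W K) {w \<in> space (W K). \<forall>j\<in>K. w j \<in> {..\<theta>}}"
      by (intro nn_integral_cmult_indicator) (use K in measurable)
    also have "emeasure (W K) {w \<in> space (W K). \<forall>j\<in>K. w j \<in> {..\<theta>}} = (\<Prod>j\<in>K. emeasure PF {..\<theta>})"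
      using K by (intro P.emeasure_PiM_Collect) auto
    also have "\<dots> = ennreal (F \<theta> ^ card K)"
      by (simp add: emeasure_eq_measure F_eq prod_ennreal measure_nonneg ennreal_power)
    finally show "(\<integral>\<^sup>+ w. indicator {0..v} \<theta> * indicator {\<theta>. \<forall>j\<in>K. w j \<le> \<theta>} \<theta> \<partial>W K)
        = indicator {0..v} \<theta> * ennreal (F \<theta> ^ card K)" .
  qed
  also have "\<dots> = (\<integral>\<^sup>+ \<theta>. ennreal (indicator {0..v} \<theta> * F \<theta> ^ card K) \<partial>lborel)"
    by (intro nn_integral_cong) (auto simp: indicator_def)
  also have "\<dots> = ennreal (integral {0..v} (\<lambda>\<theta>. F \<theta> ^ card K))"
  proof (rule nn_integral_has_integral_lebesgue)
    show "((\<lambda>\<theta>. F \<theta> ^ card K) has_integral integral {0..v} (\<lambda>\<theta>. F \<theta> ^ card K)) {0..v}"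
      by (intro integrable_integral integrable_continuous_interval continuous_intros F_cont_on)
  qed (simp add: F_nonneg)
  finally show ?thesis .
qed

lemma t_alt: "t x = 1/2 * integral {vl..x} g"
  unfolding t_def by auto

lemma upper_tail: "emeasure PF {\<theta>..} = ennreal (1 - F \<theta>)"
proof -
  have "measure PF {\<theta>..} = 1 - measure PF (UNIV - {\<theta>..})"
    using prob_compl[of "{\<theta>..}"] by simp
  moreover have "UNIV - {\<theta>..} = {..\<theta>} - {\<theta>}" by auto
  moreover have "measure PF ({..\<theta>} - {\<theta>}) = F \<theta> - measure PF {\<theta>}"
    unfolding F_eq by (intro finite_measure_Diff) auto
  ultimately show ?thesis using atomless[of \<theta>] by (simp add: emeasure_eq_measure)
qed

lemma Et_nn: "(\<integral>\<^sup>+ x. ennreal (t x) \<partial>PF) =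
   ennreal (1/2 * (integral {vl..1} g - integral {vl..1} (\<lambda>\<theta>. F \<theta> ^ n)))"
proof -
  interpret PS: pair_sigma_finite PF lborel
    by (intro pair_sigma_finite.intro sigma_finite_measure_axioms lborel.sigma_finite_measure_axioms)
  have pt: "ennreal (t x) = ennreal (1/2) * (\<integral>\<^sup>+ \<theta>. ennreal (if vl \<le> \<theta> \<and> \<theta> \<le> x then g \<theta> else 0) \<partial>lborel)" for x
  proof -
    have "(\<integral>\<^sup>+ \<theta>. ennreal (if vl \<le> \<theta> \<and> \<theta> \<le> x then g \<theta> else 0) \<partial>lborel)
        = (\<integral>\<^sup>+ \<theta>. ennreal (indicator {vl..x} \<theta> * g \<theta>) \<partial>lborel)"
      by (intro nn_integral_cong) (auto simp: indicator_def)
    also have "\<dots> = ennreal (integral {vl..x} g)"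
      by (rule nn_integral_has_integral_lebesgue) (auto simp: g_nonneg intro: integrable_integral g_int)
    finally have e: "(\<integral>\<^sup>+ \<theta>. ennreal (if vl \<le> \<theta> \<and> \<theta> \<le> x then g \<theta> else 0) \<partial>lborel) = ennreal (integral {vl..x} g)" .
    show ?thesis unfolding e t_alt by (rule ennreal_mult) (auto simp: int_nonneg)
  qed
  have "(\<integral>\<^sup>+ x. ennreal (t x) \<partial>PF) = ennreal (1/2) *
      (\<integral>\<^sup>+ x. \<integral>\<^sup>+ \<theta>. ennreal (if vl \<le> \<theta> \<and> \<theta> \<le> x then g \<theta> else 0) \<partial>lborel \<partial>PF)"
    by (simp only: pt) (rule nn_integral_cmult, measurable)
  also have "(\<integral>\<^sup>+ x. \<integral>\<^sup>+ \<theta>. ennreal (if vl \<le> \<theta> \<and> \<theta> \<le> x then g \<theta> else 0) \<partial>lborel \<partial>PF) =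
      (\<integral>\<^sup>+ \<theta>. \<integral>\<^sup>+ x. ennreal (if vl \<le> \<theta> \<and> \<theta> \<le> x then g \<theta> else 0) \<partial>PF \<partial>lborel)"
    by (rule PS.Fubini'[symmetric]) measurable
  also have "\<dots> = (\<integral>\<^sup>+ \<theta>. ennreal (indicator {vl..1} \<theta> * (g \<theta> * (1 - F \<theta>))) \<partial>lborel)"
  proof (intro nn_integral_cong)
    fix \<theta> :: real
    have "(\<integral>\<^sup>+ x. ennreal (if vl \<le> \<theta> \<and> \<theta> \<le> x then g \<theta> else 0) \<partial>PF) =
        (\<integral>\<^sup>+ x. ennreal (if vl \<le> \<theta> then g \<theta> else 0) * indicator {\<theta>..} x \<partial>PF)"
      by (intro nn_integral_cong) (auto simp: indicator_def)
    also have "\<dots> = ennreal (if vl \<le> \<theta> then g \<theta> else 0) * emeasure PF {\<theta>..}"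
      by (rule nn_integral_cmult_indicator) auto
    also have "\<dots> = ennreal (indicator {vl..1} \<theta> * (g \<theta> * (1 - F \<theta>)))"
      using F_ge1[of \<theta>] F_le1[of \<theta>]
      by (auto simp: upper_tail indicator_def ennreal_mult[symmetric] g_nonneg)
    finally show "(\<integral>\<^sup>+ x. ennreal (if vl \<le> \<theta> \<and> \<theta> \<le> x then g \<theta> else 0) \<partial>PF) =
       ennreal (indicator {vl..1} \<theta> * (g \<theta> * (1 - F \<theta>)))" .
  qed
  also have "\<dots> = ennreal (integral {vl..1} (\<lambda>\<theta>. g \<theta> * (1 - F \<theta>)))"
  proof (rule nn_integral_has_integral_lebesgue)
    show "((\<lambda>\<theta>. g \<theta> * (1 - F \<theta>)) has_integral integral {vl..1} (\<lambda>\<theta>. g \<theta> * (1 - F \<theta>))) {vl..1}"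
      by (intro integrable_integral integrable_continuous_interval continuous_intros F_cont_on g_cont_on)
  qed (simp add: g_nonneg F_le1)
  also have Deq: "integral {vl..1} (\<lambda>\<theta>. g \<theta> * (1 - F \<theta>)) = integral {vl..1} g - integral {vl..1} (\<lambda>\<theta>. F \<theta> ^ n)"
  proof -
    have e: "g \<theta> * (1 - F \<theta>) = g \<theta> - F \<theta> ^ n" for \<theta>
    proof -
      have "F \<theta> ^ n = F \<theta> ^ (n - 1) * F \<theta>" using n2 by (metis Suc_diff_1 less_le_trans pos2 power_Suc2)
      then show ?thesis unfolding g_def by (simp add: algebra_simps)
    qed
    have i1: "(\<lambda>\<theta>. F \<theta> ^ n) integrable_on {vl..1}"
      by (intro integrable_continuous_interval continuous_intros F_cont_on)
    show ?thesis unfolding e using integral_diff[OF g_int i1] by simp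
  qed
  finally have X: "(\<integral>\<^sup>+ x. ennreal (t x) \<partial>PF) = ennreal (1/2) * ennreal (integral {vl..1} g - integral {vl..1} (\<lambda>\<theta>. F \<theta> ^ n))" .
  have "0 \<le> integral {vl..1} (\<lambda>\<theta>. g \<theta> * (1 - F \<theta>))"
    by (intro integral_nonneg integrable_continuous_interval continuous_intros F_cont_on g_cont_on)
       (simp add: g_nonneg F_le1)
  then have "0 \<le> integral {vl..1} g - integral {vl..1} (\<lambda>\<theta>. F \<theta> ^ n)" using Deq by simp
  then show ?thesis unfolding X by (subst ennreal_mult) auto
qed

definition A :: real where "A = integral {0..vl} g"

lemma Et_val': "1/2 * (integral {vl..1} g - integral {vl..1} (\<lambda>\<theta>. F \<theta> ^ n)) = A / (real n - 1)"
proof -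
  have c: "integral {0..vl} g + integral {vl..1} g = integral {0..1} g"
    using vl_pos vl_lt1 by (intro int_combine) auto
  have "integral {0..1} g - integral {vl..1} (\<lambda>\<theta>. F \<theta> ^ n) = (real n + 1) / (real n - 1) * A"
    using vl_eq unfolding g_def A_def .
  then have "integral {vl..1} g - integral {vl..1} (\<lambda>\<theta>. F \<theta> ^ n) = ((real n + 1) / (real n - 1) - 1) * A"
    using c unfolding A_def by (simp add: algebra_simps)
  also have "(real n + 1) / (real n - 1) - 1 = 2 / (real n - 1)" using n2 by (simp add: field_simps)
  finally show ?thesis by simp
qed

lemma Et_integrable: "integrable PF t"
  using Et_nn by (intro integrableI_nonneg) (auto simp: t_nonneg)

lemma Et_val: "integral\<^sup>L PF t = A / (real n - 1)"
proof -
  have "integral\<^sup>L PF t = enn2real (\<integral>\<^sup>+ x. ennreal (t x) \<partial>PF)"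
    by (rule integral_eq_nn_integral) (auto simp: t_nonneg)
  also have "\<dots> = A / (real n - 1)" unfolding Et_nn Et_val'
    using int_nonneg[of 0 vl] n2 unfolding A_def by simp
  finally show ?thesis .
qed

lemma AE_PF: "AE x in PF. x \<in> {0..1}"
proof -
  have "measure PF ({..1} - {..<0}) = F 1 - measure PF {..<0}"
    unfolding F_eq by (intro finite_measure_Diff) auto
  moreover have "{..1} - {..<0} = {0..(1::real)}" by auto
  ultimately have "prob {0..1} = 1" using neg0 F_ge1[of 1] by simp
  then show ?thesis by (intro AE_prob_1) auto
qed

lemma AE_W: "finite K \<Longrightarrow> AE w in W K. \<forall>j\<in>K. w j \<in> {0..1}"
  by (intro eventually_ball_finite ballI AE_PiM_component[where M="\<lambda>_. PF"] prob_space_axioms AE_PF) auto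

lemma distr_comp: "j \<in> K \<Longrightarrow> distr (W K) PF (\<lambda>w. w j) = PF"
  by (rule distr_PiM_component) (auto intro: prob_space_axioms)

lemma int_comp: assumes "j \<in> K" shows "integrable (W K) (\<lambda>w. t (w j))"
  and "integral\<^sup>L (W K) (\<lambda>w. t (w j)) = A / (real n - 1)"
proof -
  have m: "(\<lambda>w. w j) \<in> measurable (W K) PF" using assms by measurable
  show "integrable (W K) (\<lambda>w. t (w j))"
  proof -
    have tm: "t \<in> borel_measurable PF" by measurable
    show ?thesis using integrable_distr_eq[OF m tm] Et_integrable distr_comp[OF assms] by simp
  qed
  show "integral\<^sup>L (W K) (\<lambda>w. t (w j)) = A / (real n - 1)"
    using integral_distr[OF m, of t] distr_comp[OF assms] Et_val by simp
qed

lemma ES: assumes "finite K"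
  shows "integrable (W K) (\<lambda>w. \<Sum>j\<in>K. t (w j))"
    and "integral\<^sup>L (W K) (\<lambda>w. \<Sum>j\<in>K. t (w j)) = real (card K) * (A / (real n - 1))"
  using int_comp by (auto simp: integral_sum)

lemma EG: assumes K: "finite K" "K \<noteq> {}" and v: "0 \<le> v"
  shows "integral\<^sup>L (W K) (\<lambda>w. max 0 (v - MM K w)) = integral {0..v} (\<lambda>\<theta>. F \<theta> ^ card K)"
proof -
  have "integral\<^sup>L (W K) (\<lambda>w. max 0 (v - MM K w)) = enn2real (\<integral>\<^sup>+ w. ennreal (max 0 (v - MM K w)) \<partial>W K)"
    by (rule integral_eq_nn_integral) (use K in auto)
  also have "\<dots> = integral {0..v} (\<lambda>\<theta>. F \<theta> ^ card K)" unfolding EG_nn[OF K v]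
    by (intro enn2real_ennreal integral_nonneg integrable_continuous_interval continuous_intros F_cont_on)
       (auto simp: F_nonneg)
  finally show ?thesis .
qed

end


lemma winners_sub: "spa_winners N r B \<subseteq> N" unfolding spa_winners_def by auto

lemma share_bounds: assumes "finite N"
  shows "0 \<le> spa_win_share N r B i" "spa_win_share N r B i \<le> 1"
proof -
  show "0 \<le> spa_win_share N r B i" unfolding spa_win_share_def by auto
  show "spa_win_share N r B i \<le> 1"
  proof (cases "i \<in> spa_winners N r B")
    case True
    then have "card (spa_winners N r B) \<ge> 1"
      using assms winners_sub[of N r B] by (metis One_nat_def Suc_leI card_gt_0_iff finite_subset empty_iff)
    then show ?thesis unfolding spa_win_share_def using True by auto
  qed (auto simp: spa_win_share_def)
qed

lemma spa_util_le_price: assumes "finite N"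
  shows "spa_util N r B i v \<le> max 0 (v - spa_price N r B i)"
proof -
  have s: "0 \<le> spa_win_share N r B i" "spa_win_share N r B i \<le> 1" using share_bounds[OF assms] by auto
  show ?thesis unfolding spa_util_def
  proof (cases "v - spa_price N r B i \<le> 0")
    case True then show "spa_win_share N r B i * (v - spa_price N r B i) \<le> max 0 (v - spa_price N r B i)"
      using s by (simp add: mult_nonneg_nonpos)
  next
    case False then show "spa_win_share N r B i * (v - spa_price N r B i) \<le> max 0 (v - spa_price N r B i)"
      using s by (simp add: mult_left_le_one_le)
  qed
qed

lemma Cset_finite: assumes "finite N" shows "finite {c. \<exists>j\<in>N - {i}. B j = Some c}"
proof -
  have "{c. \<exists>j\<in>N - {i}. B j = Some c} \<subseteq> (\<lambda>j. the (B j)) ` N" by force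
  then show ?thesis using assms finite_subset by blast
qed

lemma price_ge: assumes "finite N" "j \<in> N" "j \<noteq> i" "B j = Some c"
  shows "c \<le> spa_price N r B i" and "r \<le> spa_price N r B i"
  unfolding spa_price_def using assms Cset_finite[OF assms(1), of i B]
  by (auto intro!: Max_ge)

lemma spa_util_le_other: assumes "finite N" "j \<in> N" "j \<noteq> i" "B j = Some c"
  shows "spa_util N r B i v \<le> max 0 (v - c)"
  using spa_util_le_price[OF assms(1), of r B i v] price_ge(1)[of N j i B c r] assms by force

lemma spa_util_le_r: assumes "finite N"
  shows "spa_util N r B i v \<le> max 0 (v - r)"
proof -
  have "r \<le> spa_price N r B i" unfolding spa_price_def using Cset_finite[OF assms, of i B] by auto
  then show ?thesis using spa_util_le_price[OF assms, of r B i v] by auto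
qed

lemma spa_util_None: "B i = None \<Longrightarrow> spa_util N r B i v = 0"
  unfolding spa_util_def spa_win_share_def spa_winners_def by auto

lemma spa_util_truth: assumes "finite N" "i \<in> N" "B i = Some v" "r \<le> v"
  shows "spa_util N r B i v = max 0 (v - spa_price N r B i)"
proof -
  let ?C = "{c. \<exists>j\<in>N - {i}. B j = Some c}"
  let ?P = "spa_price N r B i"
  have fC: "finite ?C" by (rule Cset_finite[OF assms(1)])
  have P: "?P = Max (insert r ?C)" unfolding spa_price_def ..
  show ?thesis
  proof (cases "?P < v")
    case True
    have Cle: "c \<le> ?P" if "c \<in> ?C" for c using fC that P by auto
    have "spa_winners N r B = {i}"
    proof
      show "spa_winners N r B \<subseteq> {i}"
      proof
        fix j assume j: "j \<in> spa_winners N r B"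
        show "j \<in> {i}"
        proof (rule ccontr)
          assume "j \<notin> {i}"
          then obtain b where "B j = Some b" "v \<le> b" "j \<in> N" using j assms unfolding spa_winners_def by auto
          then have "b \<in> ?C" using \<open>j \<notin> {i}\<close> by auto
          then show False using Cle True \<open>v \<le> b\<close> by fastforce
        qed
      qed
      show "{i} \<subseteq> spa_winners N r B" unfolding spa_winners_def
      proof (clarsimp simp: assms)
        fix j c assume "j \<in> N" "B j = Some c"
        show "c \<le> v"
        proof (cases "j = i")
          case True then show ?thesis using assms \<open>B j = Some c\<close> by auto
        next
          case False then have "c \<in> ?C" using \<open>j \<in> N\<close> \<open>B j = Some c\<close> by auto
          then show ?thesis using Cle True by fastforce
        qed
      qed
    qed
    then show ?thesis unfolding spa_util_def spa_win_share_def using True by auto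
  next
    case False
    show ?thesis
    proof (cases "i \<in> spa_winners N r B")
      case True
      then have "\<forall>c\<in>?C. c \<le> v" unfolding spa_winners_def using assms by auto
      then have "?P \<le> v" using P fC assms by auto
      then have "?P = v" using False by auto
      then show ?thesis unfolding spa_util_def by simp
    next
      case nw: False
      then show ?thesis using False unfolding spa_util_def spa_win_share_def by auto
    qed
  qed
qed



lemma spa_util_ge: assumes "finite N" "B i = Some b" "b \<le> v"
  shows "0 \<le> spa_util N r B i v"
proof (cases "i \<in> spa_winners N r B")
  case True
  let ?C = "{c. \<exists>j\<in>N - {i}. B j = Some c}"
  have w: "r \<le> b" "\<forall>j\<in>N. \<forall>c. B j = Some c \<longrightarrow> c \<le> b" using True assms unfolding spa_winners_def by auto
  have "\<forall>c\<in>?C. c \<le> b" using w by auto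
  then have "spa_price N r B i \<le> b" unfolding spa_price_def using w Cset_finite[OF assms(1), of i B] by auto
  then show ?thesis unfolding spa_util_def using share_bounds[OF assms(1), of r B i] assms by auto
qed (simp add: spa_util_def spa_win_share_def)

lemma valid_bribe: assumes "\<forall>j\<in>{1..n}. 0 \<le> \<tau> j" shows "valid_action0 n (bribe_strategy n nb \<tau> v0)"
  using assms unfolding valid_action0_def bribe_strategy_def by (auto intro: sum_nonneg)

lemma accepts_bribe: "fst (bribe_strategy n nb \<tau> v0) = Some (S, p) \<Longrightarrow> proposer_accepts \<tau> S p"
  unfolding bribe_strategy_def proposer_accepts_def by (auto split: if_splits)

lemma util0_bribe: assumes "(\<Sum>j\<in>{1..n}. \<tau> j) \<le> v0" "0 \<le> v0"
  shows "util_0 n 0 v0 vs \<tau> (bribe_strategy n nb \<tau> v0) = v0 - (\<Sum>j\<in>{1..n}. \<tau> j)"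
proof -
  let ?T = "\<Sum>j\<in>{1..n}. \<tau> j"
  let ?B = "included_bids n \<tau> (Some ({1..n}, ?T)) vs (Some v0)"
  have acc: "proposer_accepts \<tau> {1..n} ?T" unfolding proposer_accepts_def by simp
  have B0: "?B 0 = Some v0" using acc unfolding included_bids_def excluded_def by auto
  have Bj: "?B j = None" if "j \<noteq> 0" for j using acc that unfolding included_bids_def excluded_def by auto
  have C: "{c. \<exists>j\<in>{0..n} - {0}. ?B j = Some c} = {}" using Bj by auto
  have "spa_util {0..n} 0 ?B 0 v0 = max 0 (v0 - spa_price {0..n} 0 ?B 0)"
    by (rule spa_util_truth) (use B0 assms in auto)
  also have "spa_price {0..n} 0 ?B 0 = 0" unfolding spa_price_def C by simp
  finally have "spa_util {0..n} 0 ?B 0 v0 = v0" using assms by simp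
  moreover have "bribe_paid \<tau> (Some ({1..n}, ?T)) = ?T" using acc unfolding bribe_paid_def by simp
  ultimately show ?thesis using assms unfolding util_0_def bribe_strategy_def by simp
qed

lemma util0_nobribe: assumes "\<not> (\<Sum>j\<in>{1..n}. \<tau> j) \<le> v0" "0 \<le> v0"
  shows "0 \<le> util_0 n 0 v0 vs \<tau> (bribe_strategy n nb \<tau> v0)"
proof -
  let ?b0 = "if nb \<tau> v0 then Some 0 else None"
  let ?B = "included_bids n \<tau> None vs ?b0"
  have B0: "?B 0 = ?b0" unfolding included_bids_def excluded_def by auto
  have "0 \<le> spa_util {0..n} 0 ?B 0 v0"
  proof (cases "nb \<tau> v0")
    case True then show ?thesis using B0 assms by (intro spa_util_ge[of _ _ _ 0]) auto
  next
    case False then show ?thesis using B0 by (simp add: spa_util_None)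
  qed
  then show ?thesis using assms unfolding util_0_def bribe_strategy_def bribe_paid_def by simp
qed

lemma excluded_sub: "valid_action0 n a \<Longrightarrow> excluded \<tau> (fst a) \<subseteq> {1..n}"
  unfolding valid_action0_def excluded_def by (auto split: option.splits prod.splits)

lemma paid_ge: "(\<Sum>j\<in>excluded \<tau> (fst a). \<tau> j) \<le> bribe_paid \<tau> (fst a)"
  unfolding excluded_def bribe_paid_def proposer_accepts_def by (auto split: option.splits prod.splits)

lemma util0_bound:
  assumes tau: "\<forall>j\<in>{1..n}. 0 \<le> \<tau> j"
    and vs: "\<forall>j\<in>{1..n}. 0 \<le> vs j \<and> vs j \<le> 1 \<and> (vs j = 1 \<or> 2 * real n * \<tau> j \<le> vs j)"
    and v0: "0 \<le> v0" "v0 \<le> 1" and a: "valid_action0 n a"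
  shows "util_0 n 0 v0 vs \<tau> a \<le> (if (\<Sum>j\<in>{1..n}. \<tau> j) \<le> v0 then v0 - (\<Sum>j\<in>{1..n}. \<tau> j) else 0)"
proof -
  define E where "E = excluded \<tau> (fst a)"
  define R where "R = {1..n} - E"
  define B where "B = included_bids n \<tau> (fst a) vs (snd a)"
  define u where "u = spa_util {0..n} 0 B 0 v0"
  define T where "T = (\<Sum>j\<in>{1..n}. \<tau> j)"
  have ES: "E \<subseteq> {1..n}" unfolding E_def using a by (rule excluded_sub)
  have TS: "T = sum \<tau> E + sum \<tau> R" unfolding T_def R_def using ES
    by (metis add.commute finite_atLeastAtMost sum.subset_diff)
  have SE: "0 \<le> sum \<tau> E" using tau ES by (intro sum_nonneg) auto
  have SR: "0 \<le> sum \<tau> R" using tau unfolding R_def by (intro sum_nonneg) auto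
  have util: "util_0 n 0 v0 vs \<tau> a \<le> u - sum \<tau> E"
    using paid_ge[of \<tau> a] unfolding util_0_def u_def B_def E_def by simp
  have uv0: "u \<le> v0" using spa_util_le_r[of "{0..n}" 0 B 0 v0] v0 unfolding u_def by simp
  have uj: "u \<le> max 0 (v0 - vs j)" if "j \<in> R" for j
  proof -
    have "B j = Some (vs j)" using that unfolding B_def R_def included_bids_def E_def by auto
    then show ?thesis unfolding u_def using that unfolding R_def
      by (intro spa_util_le_other) auto
  qed
  consider "R = {}" | "\<exists>j\<in>R. vs j = 1" | "R \<noteq> {}" "\<forall>j\<in>R. 2 * real n * \<tau> j \<le> vs j"
    using vs unfolding R_def by blast
  then show ?thesis
  proof cases
    case 1
    then have "sum \<tau> E = T" using TS by simp
    then show ?thesis using util uv0 unfolding T_def[symmetric] by auto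
  next
    case 2
    then obtain j where "j \<in> R" "vs j = 1" by auto
    then have "u \<le> 0" using uj[of j] v0 by auto
    then show ?thesis using util TS SE SR unfolding T_def[symmetric] by auto
  next
    case 3
    have fR: "finite R" unfolding R_def by auto
    define m where "m = Max (vs ` R)"
    have "m \<in> vs ` R" unfolding m_def using 3 fR by (intro Max_in) auto
    then obtain jm where jm: "jm \<in> R" "vs jm = m" by auto
    have m_ge: "vs j \<le> m" if "j \<in> R" for j unfolding m_def using fR that by auto
    have m0: "0 \<le> m" using jm vs unfolding R_def by auto
    have "sum \<tau> R \<le> (\<Sum>j\<in>R. m / (2 * real n))"
    proof (intro sum_mono)
      fix j assume "j \<in> R"
      then have "2 * real n * \<tau> j \<le> m" using 3 m_ge by (meson order_trans)
      moreover have "n > 0" using \<open>j \<in> R\<close> unfolding R_def by auto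
      ultimately show "\<tau> j \<le> m / (2 * real n)" by (simp add: field_simps)
    qed
    also have "\<dots> = real (card R) * m / (2 * real n)" by simp
    also have "\<dots> \<le> real n * m / (2 * real n)"
    proof -
      have "card R \<le> card {1..n}" unfolding R_def by (intro card_mono) auto
      then have "real (card R) \<le> real n" by simp
      then show ?thesis using m0 by (intro divide_right_mono mult_right_mono) auto
    qed
    also have "\<dots> \<le> m / 2" using m0 by (cases "n = 0") auto
    finally have SRm: "sum \<tau> R \<le> m / 2" .
    have um: "u \<le> max 0 (v0 - m)" using uj[OF jm(1)] jm by simp
    show ?thesis
    proof (cases "T \<le> v0")
      case True
      have "u - sum \<tau> E \<le> v0 - T"
      proof (cases "v0 \<le> m")
        case True
        then have "u \<le> 0" using um by simp
        then show ?thesis using TS \<open>T \<le> v0\<close> SR SE by linarith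
      next
        case False
        then have "u \<le> v0 - m" using um by simp
        then show ?thesis using TS SRm m0 by linarith
      qed
      then show ?thesis using util True unfolding T_def[symmetric] by simp
    next
      case False
      have "u - sum \<tau> E \<le> 0"
      proof (cases "v0 \<le> m")
        case True
        then have "u \<le> 0" using um by simp
        then show ?thesis using SE by linarith
      next
        case f2: False
        then have "u \<le> v0 - m" using um by simp
        then show ?thesis using TS SRm m0 False by linarith
      qed
      then show ?thesis using util False unfolding T_def[symmetric] by simp
    qed
  qed
qed

lemma win_set_bribe: assumes "(\<Sum>j\<in>{1..n}. \<tau> j) \<le> v0" "0 \<le> v0"
  shows "{vs \<in> X. 0 \<le> v0 \<and> (\<forall>j\<in>{1..n}. \<forall>c. included_bids n \<tau> (fst (bribe_strategy n nb \<tau> v0)) vs (Some v0) j = Some c \<longrightarrow> c < v0)} = X"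
  using assms unfolding bribe_strategy_def included_bids_def excluded_def proposer_accepts_def by auto

lemma win_set_nobribe: assumes "\<not> (\<Sum>j\<in>{1..n}. \<tau> j) \<le> v0"
  shows "{vs \<in> X. 0 \<le> v0 \<and> (\<forall>j\<in>{1..n}. \<forall>c. included_bids n \<tau> (fst (bribe_strategy n nb \<tau> v0)) vs (Some v0) j = Some c \<longrightarrow> c < v0)}
     = {vs \<in> X. 0 \<le> v0 \<and> (\<forall>j\<in>{1..n}. vs j < v0)}"
  using assms unfolding bribe_strategy_def included_bids_def excluded_def by auto

lemma no_win: assumes tau: "\<forall>j\<in>{1..n}. 0 \<le> \<tau> j"
    and vs: "\<forall>j\<in>{1..n}. 0 \<le> vs j \<and> vs j \<le> 1 \<and> (vs j = 1 \<or> 2 * real n * \<tau> j \<le> vs j)"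
    and v0: "0 \<le> v0" "v0 \<le> 1" and T: "\<not> (\<Sum>j\<in>{1..n}. \<tau> j) \<le> v0" and n: "1 \<le> n"
  shows "\<not> (\<forall>j\<in>{1..n}. vs j < v0)"
proof
  assume all: "\<forall>j\<in>{1..n}. vs j < v0"
  then have "\<forall>j\<in>{1..n}. 2 * real n * \<tau> j \<le> v0" using vs v0 by force
  then have "(\<Sum>j\<in>{1..n}. \<tau> j) \<le> (\<Sum>j\<in>{1..n}. v0 / (2 * real n))"
    by (intro sum_mono) (auto simp: field_simps)
  also have "\<dots> = v0 / 2" using n by simp
  finally show False using T v0 by simp
qed

lemma utili_eval:
  fixes w vs \<tau> :: "nat \<Rightarrow> real" and tt :: "real \<Rightarrow> real" and s :: real
  assumes i: "i \<in> {1..n}" and v: "0 \<le> v"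
  and vs_def: "vs = w(i := v)" and \<tau>_def: "\<tau> = (tipvec n tt vs)(i := s)" and K_def: "K = {1..n} - {i}"
  shows "(\<Sum>j\<in>{1..n}. \<tau> j) = s + (\<Sum>j\<in>K. tt (w j))" (is ?A)
   and "util_i n 0 i vs (vs(i := b)) \<tau> (bribe_strategy n nb \<tau> v0) \<le>
        (if s + (\<Sum>j\<in>K. tt (w j)) \<le> v0 then 0 else max 0 (v - Max (insert 0 (w ` K))) - s)" (is ?B)
   and "util_i n 0 i vs (vs(i := v)) \<tau> (bribe_strategy n nb \<tau> v0) =
        (if s + (\<Sum>j\<in>K. tt (w j)) \<le> v0 then 0 else max 0 (v - Max (insert 0 (w ` K))) - s)" (is ?C)
proof -
  have tj: "\<tau> j = tt (w j)" if "j \<in> K" for j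
    using that unfolding \<tau>_def tipvec_def vs_def K_def by auto
  have ti: "\<tau> i = s" unfolding \<tau>_def by simp
  have "(\<Sum>j\<in>{1..n}. \<tau> j) = \<tau> i + (\<Sum>j\<in>K. \<tau> j)" unfolding K_def using i
    by (simp add: sum.remove)
  then show A: ?A using ti tj by simp
  have main: "util_i n 0 i vs (vs(i := b')) \<tau> (bribe_strategy n nb \<tau> v0) =
        (if s + (\<Sum>j\<in>K. tt (w j)) \<le> v0 then 0 else
          spa_util {0..n} 0 (included_bids n \<tau> None (vs(i := b')) (if nb \<tau> v0 then Some 0 else None)) i v - s)
     \<and> spa_price {0..n} 0 (included_bids n \<tau> None (vs(i := b')) (if nb \<tau> v0 then Some 0 else None)) i
        = Max (insert 0 (w ` K))
     \<and> included_bids n \<tau> None (vs(i := b')) (if nb \<tau> v0 then Some 0 else None) i = Some b'" for b'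
  proof (intro conjI)
    let ?B = "included_bids n \<tau> None (vs(i := b')) (if nb \<tau> v0 then Some 0 else None)"
    show Bi: "?B i = Some b'" using i unfolding included_bids_def excluded_def by auto
    show "util_i n 0 i vs (vs(i := b')) \<tau> (bribe_strategy n nb \<tau> v0) =
        (if s + (\<Sum>j\<in>K. tt (w j)) \<le> v0 then 0 else spa_util {0..n} 0 ?B i v - s)"
    proof (cases "s + (\<Sum>j\<in>K. tt (w j)) \<le> v0")
      case True
      let ?B1 = "included_bids n \<tau> (Some ({1..n}, \<Sum>j\<in>{1..n}. \<tau> j)) (vs(i := b')) (Some v0)"
      have "?B1 i = None" using i unfolding included_bids_def excluded_def proposer_accepts_def by auto
      then show ?thesis using True A unfolding util_i_def bribe_strategy_def
        by (simp add: spa_util_None vs_def)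
    next
      case False
      then show ?thesis using A Bi ti unfolding util_i_def bribe_strategy_def by (simp add: vs_def)
    qed
    have C: "insert 0 {c. \<exists>j\<in>{0..n} - {i}. ?B j = Some c} = insert 0 (w ` K)"
    proof -
      have "{c. \<exists>j\<in>{0..n} - {i}. ?B j = Some c} = w ` K \<union> (if nb \<tau> v0 then {0} else {})"
      proof (intro equalityI subsetI)
        fix c assume "c \<in> {c. \<exists>j\<in>{0..n} - {i}. ?B j = Some c}"
        then obtain j where j: "j \<in> {0..n} - {i}" "?B j = Some c" by blast
        show "c \<in> w ` K \<union> (if nb \<tau> v0 then {0} else {})"
        proof (cases "j = 0")
          case True then show ?thesis using j unfolding included_bids_def excluded_def by (auto split: if_splits)
        next
          case False then have "j \<in> K" using j unfolding K_def by auto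
          then show ?thesis using j unfolding included_bids_def excluded_def K_def vs_def by auto
        qed
      next
        fix c assume "c \<in> w ` K \<union> (if nb \<tau> v0 then {0} else {})"
        then consider "c \<in> w ` K" | "nb \<tau> v0" "c = 0" by (auto split: if_splits)
        then show "c \<in> {c. \<exists>j\<in>{0..n} - {i}. ?B j = Some c}"
        proof cases
          case 1 then obtain j where "j \<in> K" "c = w j" by auto
          then show ?thesis unfolding included_bids_def excluded_def K_def vs_def
            by (intro CollectI bexI[of _ j]) auto
        next
          case 2 then show ?thesis unfolding included_bids_def excluded_def using i
            by (intro CollectI bexI[of _ 0]) auto
        qed
      qed
      then show ?thesis by auto
    qed
    show "spa_price {0..n} 0 ?B i = Max (insert 0 (w ` K))" unfolding spa_price_def C ..
  qed
  show ?B
  proof -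
    let ?B = "included_bids n \<tau> None (vs(i := b)) (if nb \<tau> v0 then Some 0 else None)"
    have "spa_util {0..n} 0 ?B i v \<le> max 0 (v - spa_price {0..n} 0 ?B i)"
      by (rule spa_util_le_price) auto
    then show ?thesis using main[of b] by (simp only:) auto
  qed
  have "spa_util {0..n} 0 (included_bids n \<tau> None (vs(i := v)) (if nb \<tau> v0 then Some 0 else None)) i v
     = max 0 (v - Max (insert 0 (w ` K)))"
    using main[of v] i v by (subst spa_util_truth) auto
  then show ?C using main[of v] by simp
qed



context setting begin

definition PFc where "PFc = uniform_measure PF {0..vl}"
definition Q where "Q = PiM {1..n} (\<lambda>_. PFc)"
definition clip :: "real \<Rightarrow> real" where "clip x = max 0 (min vl x)"
definition mixt :: "vec \<Rightarrow> vec \<Rightarrow> vec" where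
  "mixt \<tau> w = restrict (\<lambda>j. if \<tau> j \<le> 0 then clip (w j) else r (\<tau> j)) {1..n}"
definition mu :: "vec \<Rightarrow> vec measure" where "mu \<tau> = distr Q (vals_meas n PF) (mixt \<tau>)"
definition mix :: "vec \<Rightarrow> vec \<Rightarrow> vec" where
  "mix vs w = restrict (\<lambda>j. if vs j \<le> vl then clip (w j) else vs j) {1..n}"
definition Bel :: "vec \<Rightarrow> vec \<Rightarrow> bool" where
  "Bel \<tau> vs \<longleftrightarrow> (\<forall>j\<in>{1..n}. (\<tau> j \<le> 0 \<longrightarrow> vs j \<in> {0..vl}) \<and> (0 < \<tau> j \<longrightarrow> vs j = r (\<tau> j)))"

lemma sets_PFc[simp, measurable_cong]: "sets PFc = sets borel"
  unfolding PFc_def by simp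

lemma F_vl_pos: "0 < F vl" using Fpos[of vl] vl_pos vl_lt1 by auto

lemma PF_0vl: "measure PF {0..vl} = F vl"
proof -
  have "measure PF ({..vl} - {..<0}) = F vl - measure PF {..<0}"
    unfolding F_eq using vl_pos by (intro finite_measure_Diff) auto
  moreover have "{..vl} - {..<0} = {0..vl}" by auto
  ultimately show ?thesis using neg0 by simp
qed

lemma prob_PFc: "prob_space PFc"
  unfolding PFc_def using F_vl_pos PF_0vl
  by (intro prob_space_uniform_measure) (auto simp: emeasure_eq_measure)

lemma prob_Q: "prob_space Q"
  unfolding Q_def by (intro prob_space_PiM prob_PFc)

lemma clip_meas[measurable]: "clip \<in> borel_measurable borel"
  unfolding clip_def by measurable

lemma mixt_meas[measurable]: "(\<lambda>(\<tau>, w). mixt \<tau> w) \<in> tips_space n \<Otimes>\<^sub>M Q \<rightarrow>\<^sub>M vals_meas n PF"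
  unfolding mixt_def Q_def by measurable

lemma mixt_meas1[measurable]: "mixt \<tau> \<in> Q \<rightarrow>\<^sub>M vals_meas n PF"
  unfolding mixt_def Q_def by measurable

lemma mu_prob: "prob_space (mu \<tau>)"
  unfolding mu_def by (intro prob_space.prob_space_distr prob_Q mixt_meas1)

lemma mu_meas: "mu \<in> tips_space n \<rightarrow>\<^sub>M prob_algebra (vals_meas n PF)"
proof (rule measurable_prob_algebraI)
  show "prob_space (mu x)" for x by (rule mu_prob)
  have "Q \<in> space (subprob_algebra Q)"
    using prob_Q by (simp add: space_subprob_algebra prob_space_imp_subprob_space)
  then have c: "(\<lambda>_. Q) \<in> tips_space n \<rightarrow>\<^sub>M subprob_algebra Q" by simp
  show "mu \<in> tips_space n \<rightarrow>\<^sub>M subprob_algebra (vals_meas n PF)"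
    unfolding mu_def[abs_def] using measurable_distr2[OF mixt_meas c] by simp
qed

lemma Bel_meas: "{x \<in> space (vals_meas n PF). Bel \<tau> x} \<in> sets (vals_meas n PF)"
  unfolding Bel_def by measurable

lemma Bel_mixt: "Bel \<tau> (mixt \<tau> w)"
  unfolding Bel_def mixt_def clip_def using vl_pos by auto

lemma AE_Bel: "AE vs in mu \<tau>. Bel \<tau> vs"
  unfolding mu_def by (subst AE_distr_iff[OF mixt_meas1 Bel_meas]) (simp add: Bel_mixt)

lemma Bel_range: "Bel \<tau> vs \<Longrightarrow> j \<in> {1..n} \<Longrightarrow> vs j \<in> {0..1}"
  unfolding Bel_def using r_range[of "\<tau> j"] vl_pos vl_lt1 by (cases "\<tau> j \<le> 0") force+

lemma Bel_prop: assumes "Bel \<tau> vs" "\<forall>j\<in>{1..n}. 0 \<le> \<tau> j"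
  shows "\<forall>j\<in>{1..n}. 0 \<le> vs j \<and> vs j \<le> 1 \<and> (vs j = 1 \<or> 2 * real n * \<tau> j \<le> vs j)"
proof
  fix j assume j: "j \<in> {1..n}"
  have "vs j \<in> {0..1}" using Bel_range[OF assms(1) j] .
  moreover have "vs j = 1 \<or> 2 * real n * \<tau> j \<le> vs j"
  proof (cases "\<tau> j \<le> 0")
    case True then have "\<tau> j = 0" using assms(2) j by force
    then show ?thesis using \<open>vs j \<in> {0..1}\<close> by simp
  next
    case False then have "vs j = r (\<tau> j)" using assms(1) j unfolding Bel_def by auto
    then show ?thesis using r_prop[of "\<tau> j"] False by auto
  qed
  ultimately show "0 \<le> vs j \<and> vs j \<le> 1 \<and> (vs j = 1 \<or> 2 * real n * \<tau> j \<le> vs j)" by auto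
qed

end


context setting begin

lemma space_PFc[simp]: "space PFc = UNIV" unfolding PFc_def by simp

definition cA :: "real set \<Rightarrow> real" where "cA X = measure PF ({0..vl} \<inter> X) / F vl"

lemma PFc_clip: assumes "X \<in> sets borel"
  shows "emeasure PFc {w. clip w \<in> X} = ennreal (cA X)"
proof -
  have m: "{w. clip w \<in> X} \<in> sets borel" using assms by measurable
  have e: "{0..vl} \<inter> {w. clip w \<in> X} = {0..vl} \<inter> X" unfolding clip_def by auto
  have "emeasure PFc {w. clip w \<in> X} = emeasure PF ({0..vl} \<inter> {w. clip w \<in> X}) / emeasure PF {0..vl}"
    unfolding PFc_def using m by (subst emeasure_uniform_measure) auto
  also have "\<dots> = ennreal (measure PF ({0..vl} \<inter> X)) / ennreal (F vl)"
    unfolding e using PF_0vl by (simp add: emeasure_eq_measure)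
  also have "\<dots> = ennreal (cA X)" unfolding cA_def using F_vl_pos
    by (subst divide_ennreal) auto
  finally show ?thesis .
qed

lemma oneD: assumes A: "X \<in> sets borel"
  shows "(\<integral>\<^sup>+ x. (if x \<le> vl then ennreal (cA X) else indicator X x) \<partial>PF) = emeasure PF X"
proof -
  have "(\<integral>\<^sup>+ x. (if x \<le> vl then ennreal (cA X) else indicator X x) \<partial>PF) =
      (\<integral>\<^sup>+ x. ennreal (cA X) * indicator {..vl} x + indicator (X \<inter> {vl<..}) x \<partial>PF)"
    by (intro nn_integral_cong) (auto simp: indicator_def)
  also have "\<dots> = (\<integral>\<^sup>+ x. ennreal (cA X) * indicator {..vl} x \<partial>PF) + (\<integral>\<^sup>+ x. indicator (X \<inter> {vl<..}) x \<partial>PF)"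
    by (rule nn_integral_add) (use A in auto)
  also have "\<dots> = ennreal (cA X) * emeasure PF {..vl} + emeasure PF (X \<inter> {vl<..})"
  proof -
    have "(\<integral>\<^sup>+ x. ennreal (cA X) * indicator {..vl} x \<partial>PF) = ennreal (cA X) * emeasure PF {..vl}"
      by (rule nn_integral_cmult_indicator) auto
    moreover have "(\<integral>\<^sup>+ x. indicator (X \<inter> {vl<..}) x \<partial>PF) = emeasure PF (X \<inter> {vl<..})"
      by (rule nn_integral_indicator) (use A in auto)
    ultimately show ?thesis by simp
  qed
  also have "\<dots> = ennreal (cA X * F vl + measure PF (X \<inter> {vl<..}))"
  proof -
    have c0: "0 \<le> cA X" unfolding cA_def using F_vl_pos by simp
    have "emeasure PF {..vl} = ennreal (F vl)" by (simp add: emeasure_eq_measure F_eq)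
    moreover have "emeasure PF (X \<inter> {vl<..}) = ennreal (measure PF (X \<inter> {vl<..}))" by (simp add: emeasure_eq_measure)
    ultimately show ?thesis using c0 F_vl_pos
      by (simp only: ennreal_mult[symmetric] ennreal_plus[symmetric] measure_nonneg mult_nonneg_nonneg less_imp_le)
  qed
  also have "cA X * F vl = measure PF ({0..vl} \<inter> X)" unfolding cA_def using F_vl_pos by simp
  also have "measure PF ({0..vl} \<inter> X) + measure PF (X \<inter> {vl<..}) = measure PF X"
  proof -
    have Xm: "X \<in> sets PF" using A by simp
    have "measure PF ((X \<inter> {..<0}) \<union> (X - {..<0})) = measure PF (X \<inter> {..<0}) + measure PF (X - {..<0})"
      using Xm by (intro finite_measure_Union) auto
    moreover have "(X \<inter> {..<0}) \<union> (X - {..<0}) = X" by blast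
    ultimately have m1: "measure PF X = measure PF (X \<inter> {..<0}) + measure PF (X - {..<0})" by simp
    moreover have "measure PF (X \<inter> {..<0}) = 0"
      using finite_measure_mono[of "X \<inter> {..<0}" "{..<0}"] neg0 by (simp add: measure_nonneg antisym)
    moreover have "measure PF (({0..vl} \<inter> X) \<union> (X \<inter> {vl<..})) = measure PF ({0..vl} \<inter> X) + measure PF (X \<inter> {vl<..})"
      using Xm by (intro finite_measure_Union) auto
    moreover have "({0..vl} \<inter> X) \<union> (X \<inter> {vl<..}) = X - {..<0}" using vl_pos by auto
    ultimately show ?thesis by simp
  qed
  finally show ?thesis by (simp add: emeasure_eq_measure)
qed

lemma mix_meas[measurable]: "(\<lambda>(vs, w). mix vs w) \<in> vals_meas n PF \<Otimes>\<^sub>M Q \<rightarrow>\<^sub>M vals_meas n PF"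
  unfolding mix_def Q_def by measurable

lemma DM: "distr (vals_meas n PF \<Otimes>\<^sub>M Q) (vals_meas n PF) (\<lambda>(vs, w). mix vs w) = vals_meas n PF"
proof -
  interpret P: product_prob_space "\<lambda>_. PF" "{1..n}" using prodK by simp
  interpret PFcs: prob_space PFc by (rule prob_PFc)
  interpret PQ: product_prob_space "\<lambda>_. PFc" "{1..n}" by unfold_locales
  interpret Qs: prob_space Q by (rule prob_Q)
  show ?thesis
  proof (rule P.PiM_eqI)
    fix X assume XA: "\<And>j. j \<in> {1..n} \<Longrightarrow> X j \<in> sets PF"
    have XP: "Pi\<^sub>E {1..n} X \<in> sets (vals_meas n PF)" using XA by (intro sets_PiM_I_finite) auto
    define h where "h j x = (if x \<le> vl then ennreal (cA (X j)) else indicator (X j) x)" for j x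
    have "emeasure (distr (vals_meas n PF \<Otimes>\<^sub>M Q) (vals_meas n PF) (\<lambda>(vs, w). mix vs w)) (Pi\<^sub>E {1..n} X)
        = (\<integral>\<^sup>+ z. indicator (Pi\<^sub>E {1..n} X) z \<partial>distr (vals_meas n PF \<Otimes>\<^sub>M Q) (vals_meas n PF) (\<lambda>(vs, w). mix vs w))"
      using XP by simp
    also have "\<dots> = (\<integral>\<^sup>+ z. indicator (Pi\<^sub>E {1..n} X) (case z of (vs, w) \<Rightarrow> mix vs w) \<partial>(vals_meas n PF \<Otimes>\<^sub>M Q))"
      using XP by (subst nn_integral_distr[OF mix_meas]) auto
    also have "\<dots> = (\<integral>\<^sup>+ vs. \<integral>\<^sup>+ w. indicator (Pi\<^sub>E {1..n} X) (mix vs w) \<partial>Q \<partial>vals_meas n PF)"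
    proof -
      have mf: "(\<lambda>z. indicator (Pi\<^sub>E {1..n} X) (case z of (vs, w) \<Rightarrow> mix vs w) :: ennreal) \<in> borel_measurable (vals_meas n PF \<Otimes>\<^sub>M Q)"
        using XP by measurable
      show ?thesis using Qs.nn_integral_fst[OF mf] by simp
    qed
    also have "\<dots> = (\<integral>\<^sup>+ vs. (\<Prod>j\<in>{1..n}. h j (vs j)) \<partial>vals_meas n PF)"
    proof (intro nn_integral_cong)
      fix vs assume vs: "vs \<in> space (vals_meas n PF)"
      define Y where "Y j = (if vs j \<le> vl then {w. clip w \<in> X j} else if vs j \<in> X j then UNIV else {})" for j
      have Ym: "Y j \<in> sets borel" if "j \<in> {1..n}" for j
        using XA[OF that] unfolding Y_def by auto
      have "(\<integral>\<^sup>+ w. indicator (Pi\<^sub>E {1..n} X) (mix vs w) \<partial>Q)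
          = (\<integral>\<^sup>+ w. indicator {w \<in> space Q. \<forall>j\<in>{1..n}. w j \<in> Y j} w \<partial>Q)"
        by (intro nn_integral_cong) (auto simp: indicator_def mix_def Y_def PiE_def Pi_def)
      also have "\<dots> = emeasure Q {w \<in> space Q. \<forall>j\<in>{1..n}. w j \<in> Y j}"
      proof (intro nn_integral_indicator)
        have eq: "{w \<in> space Q. \<forall>j\<in>{1..n}. w j \<in> Y j} = Pi\<^sub>E {1..n} Y"
        proof -
          have "space PFc = UNIV" unfolding PFc_def by simp
          then show ?thesis unfolding Q_def by (auto simp: space_PiM PiE_def Pi_def)
        qed
        show "{w \<in> space Q. \<forall>j\<in>{1..n}. w j \<in> Y j} \<in> sets Q"
          unfolding eq unfolding Q_def using Ym by (intro sets_PiM_I_finite) auto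
      qed
      also have "\<dots> = (\<Prod>j\<in>{1..n}. emeasure PFc (Y j))"
        unfolding Q_def using Ym by (intro PQ.emeasure_PiM_Collect) auto
      also have "\<dots> = (\<Prod>j\<in>{1..n}. h j (vs j))"
      proof (intro prod.cong refl)
        fix j assume j: "j \<in> {1..n}"
        show "emeasure PFc (Y j) = h j (vs j)"
          using PFc_clip[of "X j"] XA[OF j] prob_space.emeasure_space_1[OF prob_PFc]
          unfolding Y_def h_def by (auto simp: indicator_def)
      qed
      finally show "(\<integral>\<^sup>+ w. indicator (Pi\<^sub>E {1..n} X) (mix vs w) \<partial>Q) = (\<Prod>j\<in>{1..n}. h j (vs j))" .
    qed
    also have "\<dots> = (\<Prod>j\<in>{1..n}. integral\<^sup>N PF (h j))"
      using XA unfolding h_def by (intro P.product_nn_integral_prod) auto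
    also have "\<dots> = (\<Prod>j\<in>{1..n}. emeasure PF (X j))"
      using XA unfolding h_def by (intro prod.cong refl oneD) auto
    finally show "emeasure (distr (vals_meas n PF \<Otimes>\<^sub>M Q) (vals_meas n PF) (\<lambda>(vs, w). mix vs w)) (Pi\<^sub>E {1..n} X)
        = (\<Prod>j\<in>{1..n}. emeasure PF (X j))" .
  qed auto
qed

end


context setting begin

lemma tipvec_meas[measurable]: "tipvec n t \<in> vals_meas n PF \<rightarrow>\<^sub>M tips_space n"
  unfolding tipvec_def by measurable

lemma tipvec_mix: "tipvec n t (mix vs w) = tipvec n t vs"
proof -
  have "t (clip x) = 0" for x unfolding clip_def using vl_pos by (intro t_zero) auto
  then show ?thesis unfolding tipvec_def mix_def using t_zero
    by (intro restrict_ext) auto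
qed

lemma mixt_tipvec: assumes "\<forall>j\<in>{1..n}. vs j \<in> {0..1}"
  shows "mixt (tipvec n t vs) w = mix vs w"
  unfolding mixt_def mix_def tipvec_def
proof (intro restrict_ext)
  fix j assume j: "j \<in> {1..n}"
  show "(if restrict (\<lambda>j. t (vs j)) {1..n} j \<le> 0 then clip (w j) else r (restrict (\<lambda>j. t (vs j)) {1..n} j)) =
        (if vs j \<le> vl then clip (w j) else vs j)"
  proof (cases "vs j \<le> vl")
    case True then show ?thesis using j t_zero by auto
  next
    case False then show ?thesis using j t_pos[of "vs j"] r_t[of "vs j"] assms by auto
  qed
qed

lemma consistent: "consistent_beliefs n PF t mu"
  unfolding consistent_beliefs_def
proof (intro conjI mu_meas allI ballI)
  fix \<tau>
  show "AE vs in mu \<tau>. \<forall>j\<in>{1..n}. vs j \<in> {0..1}"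
    using AE_Bel[of \<tau>] by eventually_elim (use Bel_range in auto)
next
  fix A B assume A: "A \<in> sets (tips_space n)" and B: "B \<in> sets (vals_meas n PF)"
  interpret Qs: prob_space Q by (rule prob_Q)
  interpret P: product_prob_space "\<lambda>_. PF" "{1..n}" using prodK by simp
  let ?V = "vals_meas n PF"
  define h :: "vec \<Rightarrow> ennreal" where "h x = indicator A (tipvec n t x) * indicator B x" for x
  have hm[measurable]: "h \<in> borel_measurable ?V" unfolding h_def using A B by measurable
  have "(\<integral>\<^sup>+ vs. indicator A (tipvec n t vs) * emeasure (mu (tipvec n t vs)) B \<partial>?V)
      = (\<integral>\<^sup>+ vs. \<integral>\<^sup>+ w. h (mix vs w) \<partial>Q \<partial>?V)"
  proof (intro nn_integral_cong_AE)
    show "AE vs in ?V. indicator A (tipvec n t vs) * emeasure (mu (tipvec n t vs)) B = (\<integral>\<^sup>+ w. h (mix vs w) \<partial>Q)"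
      using AE_W[of "{1..n}", OF finite_atLeastAtMost] 
    proof eventually_elim
      fix vs :: vec assume vs: "\<forall>j\<in>{1..n}. vs j \<in> {0..1}"
      have "emeasure (mu (tipvec n t vs)) B = (\<integral>\<^sup>+ x. indicator B x \<partial>mu (tipvec n t vs))"
        using B unfolding mu_def by simp
      also have "\<dots> = (\<integral>\<^sup>+ w. indicator B (mixt (tipvec n t vs) w) \<partial>Q)"
        unfolding mu_def using B by (subst nn_integral_distr[OF mixt_meas1]) auto
      also have "\<dots> = (\<integral>\<^sup>+ w. indicator B (mix vs w) \<partial>Q)"
        using mixt_tipvec[OF vs] by simp
      finally have "indicator A (tipvec n t vs) * emeasure (mu (tipvec n t vs)) B =
          indicator A (tipvec n t vs) * (\<integral>\<^sup>+ w. indicator B (mix vs w) \<partial>Q)" by simp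
      also have "\<dots> = (\<integral>\<^sup>+ w. indicator A (tipvec n t vs) * indicator B (mix vs w) \<partial>Q)"
      proof (rule nn_integral_cmult[symmetric])
        have "(\<lambda>w. mix vs w) \<in> Q \<rightarrow>\<^sub>M ?V" unfolding mix_def Q_def by measurable
        then show "(\<lambda>w. indicator B (mix vs w) :: ennreal) \<in> borel_measurable Q" using B by measurable
      qed
      also have "\<dots> = (\<integral>\<^sup>+ w. h (mix vs w) \<partial>Q)" unfolding h_def tipvec_mix ..
      finally show "indicator A (tipvec n t vs) * emeasure (mu (tipvec n t vs)) B = (\<integral>\<^sup>+ w. h (mix vs w) \<partial>Q)" .
    qed
  qed
  also have "\<dots> = (\<integral>\<^sup>+ z. h (case z of (vs, w) \<Rightarrow> mix vs w) \<partial>(?V \<Otimes>\<^sub>M Q))"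
  proof -
    have mf: "(\<lambda>z. h (case z of (vs, w) \<Rightarrow> mix vs w)) \<in> borel_measurable (?V \<Otimes>\<^sub>M Q)" by measurable
    show ?thesis using Qs.nn_integral_fst[OF mf] by simp
  qed
  also have "\<dots> = (\<integral>\<^sup>+ x. h x \<partial>distr (?V \<Otimes>\<^sub>M Q) ?V (\<lambda>(vs, w). mix vs w))"
  proof -
    have "h \<in> borel_measurable (distr (?V \<Otimes>\<^sub>M Q) ?V (\<lambda>(vs, w). mix vs w))" using hm by simp
    from nn_integral_distr[OF mix_meas this] show ?thesis by (simp add: case_prod_beta')
  qed
  also have "\<dots> = (\<integral>\<^sup>+ x. h x \<partial>?V)" unfolding DM ..
  also have "\<dots> = (\<integral>\<^sup>+ x. indicator ({vs \<in> space ?V. tipvec n t vs \<in> A} \<inter> B) x \<partial>?V)"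
    by (intro nn_integral_cong) (auto simp: h_def indicator_def)
  also have "\<dots> = emeasure ?V ({vs \<in> space ?V. tipvec n t vs \<in> A} \<inter> B)"
  proof (intro nn_integral_indicator sets.Int B)
    have "tipvec n t -` A \<inter> space ?V \<in> sets ?V" by (rule measurable_sets[OF tipvec_meas A])
    moreover have "tipvec n t -` A \<inter> space ?V = {vs \<in> space ?V. tipvec n t vs \<in> A}" by auto
    ultimately show "{vs \<in> space ?V. tipvec n t vs \<in> A} \<in> sets ?V" by simp
  qed
  finally show "emeasure ?V ({vs \<in> space ?V. tipvec n t vs \<in> A} \<inter> B) =
      (\<integral>\<^sup>+ vs. indicator A (tipvec n t vs) * emeasure (mu (tipvec n t vs)) B \<partial>?V)" by simp
qed

end


context setting begin

lemma seqrat: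
  assumes tau: "\<forall>j\<in>{1..n}. 0 \<le> \<tau> j" and v0: "v0 \<in> {0..1}"
  shows "valid_action0 n (bribe_strategy n nb \<tau> v0) \<and>
     (\<forall>a. valid_action0 n a \<longrightarrow> EU_0 n 0 (mu \<tau>) \<tau> v0 a \<le> EU_0 n 0 (mu \<tau>) \<tau> v0 (bribe_strategy n nb \<tau> v0)) \<and>
     (if win_prob_0 n 0 (mu \<tau>) \<tau> v0 (fst (bribe_strategy n nb \<tau> v0)) > 0 then snd (bribe_strategy n nb \<tau> v0) = Some v0
      else snd (bribe_strategy n nb \<tau> v0) \<in> {None, Some 0})"
proof (intro conjI allI impI)
  interpret M: prob_space "mu \<tau>" by (rule mu_prob)
  define T where "T = (\<Sum>j\<in>{1..n}. \<tau> j)"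
  define Vs where "Vs = (if T \<le> v0 then v0 - T else 0)"
  have v0': "0 \<le> v0" "v0 \<le> 1" using v0 by auto
  have n1: "1 \<le> n" using n2 by simp
  have Vs0: "0 \<le> Vs" unfolding Vs_def by auto
  show "valid_action0 n (bribe_strategy n nb \<tau> v0)" using tau by (rule valid_bribe)
  have AEB: "AE vs in mu \<tau>. \<forall>j\<in>{1..n}. 0 \<le> vs j \<and> vs j \<le> 1 \<and> (vs j = 1 \<or> 2 * real n * \<tau> j \<le> vs j)"
    using AE_Bel[of \<tau>] by eventually_elim (use Bel_prop tau in auto)
  have opt: "Vs \<le> EU_0 n 0 (mu \<tau>) \<tau> v0 (bribe_strategy n nb \<tau> v0)"
  proof (cases "T \<le> v0")
    case True
    have "(\<lambda>vs. util_0 n 0 v0 vs \<tau> (bribe_strategy n nb \<tau> v0)) = (\<lambda>vs. v0 - T)"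
      using util0_bribe[of \<tau> n v0] True v0' unfolding T_def by auto
    then show ?thesis unfolding EU_0_def Vs_def using True by (simp add: M.prob_space)
  next
    case False
    have "0 \<le> EU_0 n 0 (mu \<tau>) \<tau> v0 (bribe_strategy n nb \<tau> v0)"
      unfolding EU_0_def using util0_nobribe[of \<tau> n v0] False v0' unfolding T_def
      by (intro integral_nonneg_AE) auto
    then show ?thesis unfolding Vs_def using False by simp
  qed
  fix a assume a: "valid_action0 n a"
  have "EU_0 n 0 (mu \<tau>) \<tau> v0 a \<le> Vs"
  proof (cases "integrable (mu \<tau>) (\<lambda>vs. util_0 n 0 v0 vs \<tau> a)")
    case True
    have "EU_0 n 0 (mu \<tau>) \<tau> v0 a \<le> integral\<^sup>L (mu \<tau>) (\<lambda>_. Vs)" unfolding EU_0_def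
    proof (rule integral_mono_AE[OF True])
      show "integrable (mu \<tau>) (\<lambda>_. Vs)" by simp
      show "AE vs in mu \<tau>. util_0 n 0 v0 vs \<tau> a \<le> Vs"
        using AEB by eventually_elim (use util0_bound[OF tau _ v0' a] in \<open>auto simp: Vs_def T_def\<close>)
    qed
    then show ?thesis by (simp add: M.prob_space)
  next
    case False
    then show ?thesis unfolding EU_0_def using Vs0 by (simp add: not_integrable_integral_eq)
  qed
  then show "EU_0 n 0 (mu \<tau>) \<tau> v0 a \<le> EU_0 n 0 (mu \<tau>) \<tau> v0 (bribe_strategy n nb \<tau> v0)"
    using opt by simp
next
  interpret M: prob_space "mu \<tau>" by (rule mu_prob)
  define T where "T = (\<Sum>j\<in>{1..n}. \<tau> j)"
  have v0': "0 \<le> v0" "v0 \<le> 1" using v0 by auto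
  have n1: "1 \<le> n" using n2 by simp
  have AEB: "AE vs in mu \<tau>. \<forall>j\<in>{1..n}. 0 \<le> vs j \<and> vs j \<le> 1 \<and> (vs j = 1 \<or> 2 * real n * \<tau> j \<le> vs j)"
    using AE_Bel[of \<tau>] by eventually_elim (use Bel_prop tau in auto)
  show "if win_prob_0 n 0 (mu \<tau>) \<tau> v0 (fst (bribe_strategy n nb \<tau> v0)) > 0 then snd (bribe_strategy n nb \<tau> v0) = Some v0
      else snd (bribe_strategy n nb \<tau> v0) \<in> {None, Some 0}"
  proof (cases "T \<le> v0")
    case True
    have "win_prob_0 n 0 (mu \<tau>) \<tau> v0 (fst (bribe_strategy n nb \<tau> v0)) = measure (mu \<tau>) (space (mu \<tau>))"
      unfolding win_prob_0_def using win_set_bribe[of \<tau> n v0 "space (mu \<tau>)" nb] True v0'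
      unfolding T_def by simp
    then have "win_prob_0 n 0 (mu \<tau>) \<tau> v0 (fst (bribe_strategy n nb \<tau> v0)) > 0" by (simp add: M.prob_space)
    then show ?thesis using True unfolding bribe_strategy_def T_def by simp
  next
    case False
    let ?S = "{vs \<in> space (mu \<tau>). 0 \<le> v0 \<and> (\<forall>j\<in>{1..n}. vs j < v0)}"
    have eqS: "win_prob_0 n 0 (mu \<tau>) \<tau> v0 (fst (bribe_strategy n nb \<tau> v0)) = measure (mu \<tau>) ?S"
      unfolding win_prob_0_def using win_set_nobribe[of \<tau> n v0 "space (mu \<tau>)" nb] False
      unfolding T_def by simp
    have "measure (mu \<tau>) ?S = 0"
    proof (cases "?S \<in> sets (mu \<tau>)")
      case True
      have "AE vs in mu \<tau>. vs \<notin> ?S"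
        using AEB
      proof eventually_elim
        fix vs assume h: "\<forall>j\<in>{1..n}. 0 \<le> vs j \<and> vs j \<le> 1 \<and> (vs j = 1 \<or> 2 * real n * \<tau> j \<le> vs j)"
        have "\<not> (\<forall>j\<in>{1..n}. vs j < v0)"
          using no_win[OF tau h v0'] False n1 unfolding T_def by blast
        then show "vs \<notin> ?S" by blast
      qed
      note ae = this
      have eqN: "{x \<in> space (mu \<tau>). \<not> (x \<notin> ?S)} = ?S" by blast
      have "emeasure (mu \<tau>) ?S = 0" using AE_iff_measurable[OF True eqN] ae by (rule iffD1)
      then show ?thesis unfolding measure_def by simp
    next
      case nS: False then show ?thesis by (rule measure_notin_sets)
    qed
    then have "\<not> win_prob_0 n 0 (mu \<tau>) \<tau> v0 (fst (bribe_strategy n nb \<tau> v0)) > 0" using eqS by simp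
    moreover have "snd (bribe_strategy n nb \<tau> v0) \<in> {None, Some 0}"
      using False unfolding bribe_strategy_def T_def by auto
    ultimately show ?thesis by (subst if_not_P) auto
  qed
qed

end


lemma arith1:
  fixes S G s :: real
  assumes "0 \<le> S" "S \<le> 1/2" "0 \<le> G" "G \<le> 1" "0 \<le> s"
  shows "min 1 (S + s) * (G - s) \<le> (S + min s (1/2)) * (G - min s (1/2))"
proof (cases "s \<le> 1/2")
  case True
  then have "min 1 (S + s) = S + s" "min s (1/2) = s" using assms by auto
  then show ?thesis by simp
next
  case False
  then have m: "min s (1/2) = 1/2" by simp
  show ?thesis
  proof (cases "S + s \<le> 1")
    case True
    have e: "(S + 1/2) * (G - 1/2) - (S + s) * (G - s) = (s - 1/2) * (S + s + 1/2 - G)"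
      by (simp add: algebra_simps)
    have "0 \<le> (s - 1/2) * (S + s + 1/2 - G)" using False assms by (intro mult_nonneg_nonneg) auto
    then show ?thesis using True e m by simp
  next
    case f2: False
    have e: "(S + 1/2) * (G - 1/2) - (G - 1 + S) = (S - 1/2) * (G - 3/2)" by (simp add: algebra_simps) (simp add: field_simps)
    have "0 \<le> (S - 1/2) * (G - 3/2)" using assms by (intro mult_nonpos_nonpos) auto
    then show ?thesis using f2 e m by simp
  qed
qed

lemma probU: "prob_space unif01"
  by (intro prob_space_uniform_measure) auto

lemma U_int: assumes X: "0 \<le> X"
  shows "integral\<^sup>L unif01 (\<lambda>v0. if X \<le> v0 then 0 else c) = min 1 X * c"
proof -
  have "(\<lambda>v0. if X \<le> v0 then 0 else c) = (\<lambda>v0. indicator {..<X} v0 * c)"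
    by (auto simp: indicator_def)
  then have "integral\<^sup>L unif01 (\<lambda>v0. if X \<le> v0 then 0 else c) = measure unif01 {..<X} * c"
    by simp
  also have "measure unif01 {..<X} = min 1 X"
  proof -
    have "emeasure unif01 {..<X} = emeasure lborel ({0..1} \<inter> {..<X}) / emeasure lborel {0..1::real}"
      by (rule emeasure_uniform_measure) auto
    also have "\<dots> = ennreal (min 1 X)"
    proof (cases "X \<le> 1")
      case True
      then have "{0..1} \<inter> {..<X} = {0..<X}" by auto
      then show ?thesis using True X by (simp add: divide_ennreal_def)
    next
      case False
      then have "{0..1} \<inter> {..<X} = {0..1::real}" by auto
      then show ?thesis using False by (simp add: divide_ennreal_def)
    qed
    finally show ?thesis unfolding measure_def using X by simp
  qed
  finally show ?thesis .
qed



locale bidder = setting +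
  fixes i :: nat and v :: real
  assumes i_in: "i \<in> {1..n}" and v0le: "0 \<le> v" and vle1: "v \<le> 1"
begin

definition K :: "nat set" where "K = {1..n} - {i}"
definition SS :: "vec \<Rightarrow> real" where "SS w = (\<Sum>j\<in>K. t (w j))"
definition G :: "vec \<Rightarrow> real" where "G w = max 0 (v - MM K w)"
definition hfun :: "real \<Rightarrow> real \<times> vec \<Rightarrow> real" where
  "hfun s z = (if s + SS (snd z) \<le> fst z then 0 else G (snd z) - s)"
definition Qf :: "real \<Rightarrow> real" where "Qf x = integral\<^sup>L (W K) (\<lambda>w. (SS w + x) * (G w - x))"

lemma K_fin[simp]: "finite K" unfolding K_def by simp
lemma K_ne: "K \<noteq> {}"
proof -
  have "(if i = 1 then 2 else 1) \<in> K" using n2 i_in unfolding K_def by auto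
  then show ?thesis by auto
qed
lemma K_card: "card K = n - 1" unfolding K_def using i_in by (simp add: card_Diff_singleton)

lemma MM_alt: "Max (insert 0 (w ` K)) = MM K w"
  unfolding MM_def using K_ne by (simp add: image_image)

lemma SS_meas[measurable]: "SS \<in> borel_measurable (W K)" unfolding SS_def by measurable
lemma G_meas[measurable]: "G \<in> borel_measurable (W K)" unfolding G_def by measurable

lemma SS_nonneg: "0 \<le> SS w" unfolding SS_def by (intro sum_nonneg) (auto simp: t_nonneg)

lemma SS_le: assumes "\<forall>j\<in>K. w j \<in> {0..1}" shows "SS w \<le> 1/2"
proof -
  have "SS w \<le> (\<Sum>j\<in>K. 1 / (2 * real n))" unfolding SS_def
  proof (intro sum_mono)
    fix j assume "j \<in> K"
    then have "t (w j) \<le> w j / (2 * real n)" using assms t_le by auto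
    also have "\<dots> \<le> 1 / (2 * real n)" using assms \<open>j \<in> K\<close> by (intro divide_right_mono) auto
    finally show "t (w j) \<le> 1 / (2 * real n)" .
  qed
  also have "\<dots> = real (n - 1) / (2 * real n)" using K_card by simp
  also have "\<dots> \<le> 1/2" using n2 by (simp add: field_simps)
  finally show ?thesis .
qed

lemma G_bounds: "0 \<le> G w" "G w \<le> 1"
  unfolding G_def MM_def using v0le vle1 by auto

lemma AE_K: "AE w in W K. \<forall>j\<in>K. w j \<in> {0..1}" by (rule AE_W) simp

lemma probWK: "prob_space (W K)" by (rule probW)

lemma t_v_le: "t v \<le> 1/4"
proof -
  have "t v \<le> v / (2 * real n)" using t_le v0le vle1 by auto
  also have "\<dots> \<le> 1 / 4" using n2 v0le vle1 by (simp add: field_simps)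
  finally show ?thesis .
qed

lemma hfun_meas[measurable]: "hfun s \<in> borel_measurable (unif01 \<Otimes>\<^sub>M W K)"
  unfolding hfun_def by measurable

lemma hfun_int: assumes "0 \<le> s" shows "integrable (unif01 \<Otimes>\<^sub>M W K) (hfun s)"
proof -
  interpret PP: prob_space "unif01 \<Otimes>\<^sub>M W K" by (intro prob_space_pair probU probWK)
  show ?thesis
  proof (rule PP.integrable_const_bound[where B="1 + s"])
    show "AE x in unif01 \<Otimes>\<^sub>M W K. norm (hfun s x) \<le> 1 + s"
    proof (intro AE_I2)
      fix x
      show "norm (hfun s x) \<le> 1 + s"
        using G_bounds[of "snd x"] assms unfolding hfun_def by (auto simp: abs_le_iff)
    qed
  qed simp
qed

lemma hfun_fubini: assumes "0 \<le> s"
  shows "integral\<^sup>L (unif01 \<Otimes>\<^sub>M W K) (hfun s) = integral\<^sup>L (W K) (\<lambda>w. min 1 (s + SS w) * (G w - s))"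
    and "integrable (W K) (\<lambda>w. min 1 (s + SS w) * (G w - s))"
proof -
  interpret U: prob_space unif01 by (rule probU)
  interpret WK: prob_space "W K" by (rule probWK)
  interpret PS: pair_sigma_finite unif01 "W K" by unfold_locales
  have i: "integrable (unif01 \<Otimes>\<^sub>M W K) (case_prod (\<lambda>v0 w. hfun s (v0, w)))"
    using hfun_int[OF assms] by simp
  have inner: "(\<integral>v0. hfun s (v0, w) \<partial>unif01) = min 1 (s + SS w) * (G w - s)" for w
  proof -
    have "(\<lambda>v0. hfun s (v0, w)) = (\<lambda>v0. if s + SS w \<le> v0 then 0 else G w - s)"
      by (auto simp: hfun_def)
    then show ?thesis using U_int[of "s + SS w" "G w - s"] assms SS_nonneg[of w] by simp
  qed
  show "integral\<^sup>L (unif01 \<Otimes>\<^sub>M W K) (hfun s) = integral\<^sup>L (W K) (\<lambda>w. min 1 (s + SS w) * (G w - s))"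
    using PS.integral_snd[OF i] inner by simp
  show "integrable (W K) (\<lambda>w. min 1 (s + SS w) * (G w - s))"
    using PS.integrable_snd[OF i] inner by simp
qed

lemma SS_int: "integrable (W K) SS"
  using ES(1)[OF K_fin] unfolding SS_def[abs_def] .

lemma G_int: "integrable (W K) G"
proof -
  interpret WK: prob_space "W K" by (rule probWK)
  show ?thesis by (rule WK.integrable_const_bound[where B=1]) (use G_bounds in auto)
qed

lemma Qint: "integrable (W K) (\<lambda>w. (SS w + x) * (G w - x))"
proof -
  interpret WK: prob_space "W K" by (rule probWK)
  show ?thesis
  proof (rule WK.integrable_const_bound[where B="(1/2 + \<bar>x\<bar>) * (1 + \<bar>x\<bar>)"])
    show "AE w in W K. norm ((SS w + x) * (G w - x)) \<le> (1/2 + \<bar>x\<bar>) * (1 + \<bar>x\<bar>)"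
      using AE_K
    proof eventually_elim
      fix w :: vec assume "\<forall>j\<in>K. w j \<in> {0..1}"
      then have "SS w \<le> 1/2" by (rule SS_le)
      then have a: "\<bar>SS w + x\<bar> \<le> 1/2 + \<bar>x\<bar>" using SS_nonneg[of w] by (auto simp: abs_le_iff)
      have b: "\<bar>G w - x\<bar> \<le> 1 + \<bar>x\<bar>" using G_bounds[of w] by (auto simp: abs_le_iff)
      show "norm ((SS w + x) * (G w - x)) \<le> (1/2 + \<bar>x\<bar>) * (1 + \<bar>x\<bar>)"
        unfolding real_norm_def abs_mult using a b by (intro mult_mono) auto
    qed
  qed simp
qed

lemma SG_int: "integrable (W K) (\<lambda>w. SS w * G w)"
  using Qint[of 0] by simp

lemma Qf_eq: "Qf x = integral\<^sup>L (W K) (\<lambda>w. SS w * G w) + x * integral\<^sup>L (W K) G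
     - x * integral\<^sup>L (W K) SS - x^2"
proof -
  interpret WK: prob_space "W K" by (rule probWK)
  have e: "(\<lambda>w. (SS w + x) * (G w - x)) = (\<lambda>w. (SS w * G w + x * G w) - (x * SS w + x^2))"
    by (auto simp: algebra_simps power2_eq_square)
  have "Qf x = integral\<^sup>L (W K) (\<lambda>w. SS w * G w + x * G w) - integral\<^sup>L (W K) (\<lambda>w. x * SS w + x^2)"
  proof -
    have i1: "integrable (W K) (\<lambda>w. SS w * G w + x * G w)" using SG_int G_int by auto
    have i2: "integrable (W K) (\<lambda>w. x * SS w + x^2)" using SS_int by auto
    show ?thesis unfolding Qf_def e by (rule Bochner_Integration.integral_diff[OF i1 i2])
  qed
  also have "integral\<^sup>L (W K) (\<lambda>w. SS w * G w + x * G w) = integral\<^sup>L (W K) (\<lambda>w. SS w * G w) + x * integral\<^sup>L (W K) G"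
    using SG_int G_int by (subst Bochner_Integration.integral_add) auto
  also have "integral\<^sup>L (W K) (\<lambda>w. x * SS w + x^2) = x * integral\<^sup>L (W K) SS + x^2"
    using SS_int by (subst Bochner_Integration.integral_add) (auto simp: WK.prob_space)
  finally show ?thesis by simp
qed

lemma EG_val: "integral\<^sup>L (W K) G = integral {0..v} g"
  unfolding G_def[abs_def] using EG[OF K_fin K_ne v0le] K_card unfolding g_def by simp

lemma ES_val: "integral\<^sup>L (W K) SS = A"
  unfolding SS_def[abs_def] using ES(2)[OF K_fin] K_card n2 by simp

lemma Q_max: assumes "0 \<le> x" shows "Qf x \<le> Qf (t v)"
proof (cases "vl \<le> v")
  case True
  have "integral {0..vl} g + integral {vl..v} g = integral {0..v} g"
    using True vl_pos by (intro int_combine) auto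
  then have D: "integral {0..v} g - A = 2 * t v" unfolding A_def t_alt by simp
  have "Qf (t v) - Qf x = (t v - x)^2"
    unfolding Qf_eq EG_val ES_val using D by (simp add: algebra_simps power2_eq_square)
  then show ?thesis by (smt (verit) zero_le_power2)
next
  case False
  then have t0: "t v = 0" using t_zero by simp
  have "integral {0..v} g + integral {v..vl} g = integral {0..vl} g"
    using False v0le by (intro int_combine) auto
  then have D: "integral {0..v} g - A \<le> 0" unfolding A_def using int_nonneg[of v vl] by simp
  have "Qf 0 - Qf x = x^2 - x * (integral {0..v} g - A)"
    unfolding Qf_eq EG_val ES_val by (simp add: algebra_simps)
  moreover have "0 \<le> x * (integral {0..v} g - A) \<Longrightarrow> False \<or> True" by simp
  moreover have "x * (integral {0..v} g - A) \<le> 0" using assms D by (simp add: mult_nonneg_nonpos)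
  ultimately show ?thesis using t0 by (smt (verit) zero_le_power2)
qed

lemma Q0: "0 \<le> Qf 0"
  unfolding Qf_def using SS_nonneg G_bounds by (intro integral_nonneg_AE AE_I2) simp

lemma truth_eq: "integral\<^sup>L (W K) (\<lambda>w. min 1 (t v + SS w) * (G w - t v)) = Qf (t v)"
  unfolding Qf_def
proof (rule integral_cong_AE)
  show "AE w in W K. min 1 (t v + SS w) * (G w - t v) = (SS w + t v) * (G w - t v)"
    using AE_K
  proof eventually_elim
    fix w :: vec assume "\<forall>j\<in>K. w j \<in> {0..1}"
    then have "t v + SS w \<le> 1" using SS_le t_v_le by fastforce
    then show "min 1 (t v + SS w) * (G w - t v) = (SS w + t v) * (G w - t v)" by (simp add: add.commute)
  qed
qed simp_all

lemma dev_le: assumes "0 \<le> s"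
  shows "integral\<^sup>L (W K) (\<lambda>w. min 1 (s + SS w) * (G w - s)) \<le> Qf (min s (1/2))"
  unfolding Qf_def
proof (rule integral_mono_AE)
  show "integrable (W K) (\<lambda>w. min 1 (s + SS w) * (G w - s))" by (rule hfun_fubini(2)[OF assms])
  show "integrable (W K) (\<lambda>w. (SS w + min s (1/2)) * (G w - min s (1/2)))" by (rule Qint)
  show "AE w in W K. min 1 (s + SS w) * (G w - s) \<le> (SS w + min s (1/2)) * (G w - min s (1/2))"
    using AE_K
  proof eventually_elim
    fix w :: vec assume "\<forall>j\<in>K. w j \<in> {0..1}"
    then show "min 1 (s + SS w) * (G w - s) \<le> (SS w + min s (1/2)) * (G w - min s (1/2))"
      using arith1[of "SS w" "G w" s] SS_le SS_nonneg[of w] G_bounds[of w] assms by (simp add: add.commute)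
  qed
qed

lemma integrand_truth:
  "(\<lambda>(v0, w). let vs = w(i := v); \<tau> = (tipvec n t vs)(i := t v)
      in util_i n 0 i vs (vs(i := v)) \<tau> (bribe_strategy n nb \<tau> v0)) = hfun (t v)"
proof (intro ext, clarify)
  fix v0 and w :: vec
  have "util_i n 0 i (w(i := v)) ((w(i := v))(i := v)) ((tipvec n t (w(i := v)))(i := t v))
      (bribe_strategy n nb ((tipvec n t (w(i := v)))(i := t v)) v0) =
     (if t v + (\<Sum>j\<in>K. t (w j)) \<le> v0 then 0 else max 0 (v - Max (insert 0 (w ` K))) - t v)"
    by (rule utili_eval(3)[OF i_in v0le refl refl K_def])
  then show "(let vs = w(i := v); \<tau> = (tipvec n t vs)(i := t v)
      in util_i n 0 i vs (vs(i := v)) \<tau> (bribe_strategy n nb \<tau> v0)) = hfun (t v) (v0, w)"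
    unfolding hfun_def SS_def G_def MM_alt by (simp add: Let_def)
qed

lemma integrand_dev:
  "(let vs = w(i := v); \<tau> = (tipvec n t vs)(i := s)
      in util_i n 0 i vs (vs(i := b)) \<tau> (bribe_strategy n nb \<tau> v0)) \<le> hfun s (v0, w)"
proof -
  have "util_i n 0 i (w(i := v)) ((w(i := v))(i := b)) ((tipvec n t (w(i := v)))(i := s))
      (bribe_strategy n nb ((tipvec n t (w(i := v)))(i := s)) v0) \<le>
     (if s + (\<Sum>j\<in>K. t (w j)) \<le> v0 then 0 else max 0 (v - Max (insert 0 (w ` K))) - s)"
    by (rule utili_eval(2)[OF i_in v0le refl refl K_def])
  moreover have "hfun s (v0, w) = (if s + (\<Sum>j\<in>K. t (w j)) \<le> v0 then 0 else max 0 (v - Max (insert 0 (w ` K))) - s)"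
    unfolding hfun_def SS_def G_def MM_alt by simp
  ultimately show ?thesis unfolding Let_def by simp
qed

lemma EUi_truth: "EU_i n 0 PF t (bribe_strategy n nb) i v v (t v) = Qf (t v)"
proof -
  have KK: "{1..n} - {i} = K" unfolding K_def ..
  have "EU_i n 0 PF t (bribe_strategy n nb) i v v (t v) = integral\<^sup>L (unif01 \<Otimes>\<^sub>M W K) (hfun (t v))"
    unfolding EU_i_def KK integrand_truth ..
  also have "\<dots> = integral\<^sup>L (W K) (\<lambda>w. min 1 (t v + SS w) * (G w - t v))"
    by (rule hfun_fubini(1)) (rule t_nonneg)
  also have "\<dots> = Qf (t v)" by (rule truth_eq)
  finally show ?thesis .
qed

lemma EUi_dev: assumes s: "0 \<le> s"
  shows "EU_i n 0 PF t (bribe_strategy n nb) i v b s \<le> EU_i n 0 PF t (bribe_strategy n nb) i v v (t v)"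
proof -
  have KK: "{1..n} - {i} = K" unfolding K_def ..
  define f where "f = (\<lambda>(v0, w). let vs = w(i := v); \<tau> = (tipvec n t vs)(i := s)
      in util_i n 0 i vs (vs(i := b)) \<tau> (bribe_strategy n nb \<tau> v0))"
  have EU: "EU_i n 0 PF t (bribe_strategy n nb) i v b s = integral\<^sup>L (unif01 \<Otimes>\<^sub>M W K) f"
    unfolding EU_i_def KK f_def ..
  have "EU_i n 0 PF t (bribe_strategy n nb) i v b s \<le> Qf (t v)"
  proof (cases "integrable (unif01 \<Otimes>\<^sub>M W K) f")
    case True
    have "integral\<^sup>L (unif01 \<Otimes>\<^sub>M W K) f \<le> integral\<^sup>L (unif01 \<Otimes>\<^sub>M W K) (hfun s)"
    proof (rule integral_mono[OF True hfun_int[OF s]])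
      fix z assume "z \<in> space (unif01 \<Otimes>\<^sub>M W K)"
      obtain v0 w where z: "z = (v0, w)" by (cases z)
      show "f z \<le> hfun s z" unfolding z f_def by (simp only: case_prod_conv) (rule integrand_dev)
    qed
    also have "\<dots> = integral\<^sup>L (W K) (\<lambda>w. min 1 (s + SS w) * (G w - s))" by (rule hfun_fubini(1)[OF s])
    also have "\<dots> \<le> Qf (min s (1/2))" by (rule dev_le[OF s])
    also have "\<dots> \<le> Qf (t v)" using s by (intro Q_max) auto
    finally show ?thesis unfolding EU .
  next
    case False
    then have "EU_i n 0 PF t (bribe_strategy n nb) i v b s = 0" unfolding EU by (rule not_integrable_integral_eq)
    also have "0 \<le> Qf 0" by (rule Q0)
    also have "\<dots> \<le> Qf (t v)" by (rule Q_max) simp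
    finally show ?thesis .
  qed
  then show ?thesis using EUi_truth by simp
qed

end


theorem proposition6:
  fixes n :: nat and f F :: "real \<Rightarrow> real" and vl :: real
    and nb :: "(nat \<Rightarrow> real) \<Rightarrow> real \<Rightarrow> bool"
  assumes n2: "2 \<le> n"
    and f_meas: "f \<in> borel_measurable borel"
    and f_nonneg: "\<forall>x. 0 \<le> f x"
    and f_supp: "\<forall>x. x \<notin> {0..1} \<longrightarrow> f x = 0"
    and f_prob: "prob_space (density lborel (\<lambda>x. ennreal (f x)))"
    and full_support: "\<forall>x\<in>{0..1}. \<forall>e>0.
          measure (density lborel (\<lambda>x. ennreal (f x))) {x - e<..<x + e} > 0"
    and F_def: "\<forall>x. F x = measure (density lborel (\<lambda>x. ennreal (f x))) {..x}"
    and cond: "\<forall>v\<in>{0..1}. integral {0..v} (\<lambda>\<theta>. F \<theta> ^ (n - 1)) \<le> v / real n"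
    and vl_range: "vl \<in> {0..1}"
    and vl_eq: "integral {0..1} (\<lambda>\<theta>. F \<theta> ^ (n - 1)) - integral {vl..1} (\<lambda>\<theta>. F \<theta> ^ n)
          = (real n + 1) / (real n - 1) * integral {0..vl} (\<lambda>\<theta>. F \<theta> ^ (n - 1))"
    and nb_meas: "(\<lambda>(\<tau>, v0). nb \<tau> v0) \<in> tips_space n \<Otimes>\<^sub>M borel \<rightarrow>\<^sub>M count_space UNIV"
  shows "equilibrium n 0 (density lborel (\<lambda>x. ennreal (f x)))
           (\<lambda>v. if v < vl then 0 else 1 / 2 * integral {vl..v} (\<lambda>\<theta>. F \<theta> ^ (n - 1)))
           (bribe_strategy n nb)
       \<and> (\<forall>\<tau> v0 S p. fst (bribe_strategy n nb \<tau> v0) = Some (S, p) \<longrightarrow> proposer_accepts \<tau> S p)"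
proof -
  define PF where "PF = density lborel (\<lambda>x. ennreal (f x))"
  interpret P: prob_space PF using f_prob unfolding PF_def .
  have sets_PF: "sets PF = sets borel" unfolding PF_def by simp
  have zero_set: "measure PF X = 0" if X: "X \<in> sets borel" "\<forall>x\<in>X. x \<notin> {0..1}" for X
  proof -
    have "emeasure PF X = (\<integral>\<^sup>+ x. ennreal (f x) * indicator X x \<partial>lborel)"
      unfolding PF_def using X f_meas by (subst emeasure_density) auto
    also have "\<dots> = (\<integral>\<^sup>+ x. 0 \<partial>(lborel :: real measure))"
    proof (rule nn_integral_cong)
      fix x show "ennreal (f x) * indicator X x = 0" using X f_supp by (cases "x \<in> X") auto
    qed
    finally show ?thesis by (simp add: measure_def)
  qed
  have atomless: "measure PF {x} = 0" for x
  proof -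
    have "emeasure PF {x} = (\<integral>\<^sup>+ y. ennreal (f y) * indicator {x} y \<partial>lborel)"
      unfolding PF_def using f_meas by (subst emeasure_density) auto
    also have "\<dots> = (\<integral>\<^sup>+ y. 0 \<partial>(lborel :: real measure))"
      by (intro nn_integral_cong_AE eventually_mono[OF AE_lborel_singleton[of x]]) auto
    finally show ?thesis by (simp add: measure_def)
  qed
  have Fpos: "0 < F x" if "0 < x" "x \<le> 1" for x
  proof -
    have "x/2 \<in> {0..1}" "x/2 > 0" using that by auto
    then have "0 < measure PF {x/2 - x/2<..<x/2 + x/2}"
      using full_support unfolding PF_def by blast
    also have "\<dots> \<le> measure PF {..x}" using sets_PF by (intro P.finite_measure_mono) auto
    finally show ?thesis using F_def unfolding PF_def by simp
  qed
  interpret S: setting PF n F vl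
  proof (unfold_locales)
    show "sets PF = sets borel" by (rule sets_PF)
    show "2 \<le> n" by (rule n2)
    show "measure PF {x} = 0" for x by (rule atomless)
    show "measure PF {..<0} = 0" by (rule zero_set) auto
    show "measure PF {1<..} = 0" by (rule zero_set) auto
    show "F x = measure PF {..x}" for x using F_def unfolding PF_def by simp
    show "0 < x \<Longrightarrow> x \<le> 1 \<Longrightarrow> 0 < F x" for x by (rule Fpos)
  qed (use cond vl_range vl_eq in auto)
  have tt: "(\<lambda>v. if v < vl then 0 else 1 / 2 * integral {vl..v} (\<lambda>\<theta>. F \<theta> ^ (n - 1))) = S.t"
  proof -
    have "S.g = (\<lambda>\<theta>. F \<theta> ^ (n - 1))" by (auto simp: S.g_def fun_eq_iff)
    then show ?thesis unfolding S.t_def by (simp only:)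
  qed
  have eq: "equilibrium n 0 PF S.t (bribe_strategy n nb)"
    unfolding equilibrium_def
  proof (intro conjI ballI exI[of _ S.mu] allI impI)
    show "0 \<le> S.t v" for v by (rule S.t_nonneg)
    show "consistent_beliefs n PF S.t S.mu" by (rule S.consistent)
  next
    fix \<tau> :: vec and v0 :: real assume "\<tau> \<in> space (tips_space n)" "\<forall>j\<in>{1..n}. 0 \<le> \<tau> j" "v0 \<in> {0..1}"
    note h = S.seqrat[OF this(2,3), of nb]
    show "valid_action0 n (bribe_strategy n nb \<tau> v0)" using h by blast
    show "EU_0 n 0 (S.mu \<tau>) \<tau> v0 a \<le> EU_0 n 0 (S.mu \<tau>) \<tau> v0 (bribe_strategy n nb \<tau> v0)"
      if "valid_action0 n a" for a using h that by blast
    show "if win_prob_0 n 0 (S.mu \<tau>) \<tau> v0 (fst (bribe_strategy n nb \<tau> v0)) > 0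
        then snd (bribe_strategy n nb \<tau> v0) = Some v0 else snd (bribe_strategy n nb \<tau> v0) \<in> {None, Some 0}"
      using h by blast
  next
    fix i :: nat and v b s :: real assume i: "i \<in> {1..n}" and v: "v \<in> {0..1}" and s: "0 \<le> s"
    interpret B: bidder PF n F vl i v using i v by unfold_locales auto
    show "EU_i n 0 PF S.t (bribe_strategy n nb) i v b s \<le> EU_i n 0 PF S.t (bribe_strategy n nb) i v v (S.t v)"
      by (rule B.EUi_dev[OF s])
  qed
  show ?thesis unfolding tt using eq accepts_bribe unfolding PF_def by blast
qed


end
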